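(* Consider the time-invariant noiseless affine system $x(t+1)=Ax(t)+Bu(t)+s$ with $(A,B)$ controllable, and a collected trajectory $\tilde x(0:L-1)$, $\tilde u(0:L-1)$ of this system with $\tilde u$ persistently exciting of order $n+(T+1)+1$. Consider the problem $$\min_{\mathbf{x},\mathbf{u},G,\hat g} J(\mathbf{x},\mathbf{u})\quad\text{s.t.}\quad \begin{bmatrix}\mathbf{x}\\ \mathbf{u}\end{bmatrix}=\begin{bmatrix} H_{T+1}(\tilde x)\\ H_{T+1}(\tilde u)\end{bmatrix}\begin{bmatrix} G-\hat g\mathbf{1}_n^\top & \hat g\end{bmatrix}\begin{bmatrix} x_0\\ 1\end{bmatrix},\ \ G\in\Gamma(\tilde x),\ \hat g\in\Lambda(\tilde x),$$ $$\mathcal{H}_x\mathbf{x}+\mathcal{H}_u\mathbf{u}\le\mathbf{h},\quad x_0=x(0),\quad x_T\in\mathcal{X}_T.\qquad (\mathrm{P}_3)$$ Then a sequence $(x^*_{0:T},u^*_{0:T})$ is an optimal solution (in its $(\mathbf{x},\mathbf{u})$ components) of $(\mathrm{P}_3)$ if and only if it is an optimal solution of the MPC problem $$\min_{u_{0:T},x_{0:T}} J(u_{0:T},x_{0:T})\ \text{s.t.}\ x_{t+1}=Ax_t+Bu_t+s,\ H_xx_t+H_uu_t\le h\ (t\in[0,T]),\ x_0=x(0),\ x_T\in\mathcal{X}_T.$$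
   Context: Cost $J(u_{0:T},x_{0:T})=\|Px_T\|_p+\sum_{t=0}^{T-1}(\|Qx_t\|_p+\|Ru_t\|_p)$, $p\in\{1,2,\infty\}$; for $p=2$, $Q=Q^\top\succeq0$, $R=R^\top\succ0$, $P=P^\top\succeq0$; for $p\in\{1,\infty\}$, $Q,P,R$ full rank. $H_x\in\mathbb{R}^{d\times n}$, $H_u\in\mathbb{R}^{d\times m}$, $h\in\mathbb{R}^d$; $\mathcal{X}_T$ polyhedral; $\mathcal{H}_x=\mathrm{diag}(H_x,\dots,H_x)$, $\mathcal{H}_u=\mathrm{diag}(H_u,\dots,H_u)$ ($T+1$ copies), $\mathbf{h}=[h^\top,\dots,h^\top]^\top$; $\mathbf{x}=[x_0^\top,\dots,x_T^\top]^\top$, $\mathbf{u}=[u_0^\top,\dots,u_T^\top]^\top$. For a signal $\sigma(0:N-1)$ with values in $\mathbb{R}^p$, the Hankel matrix of depth $k$ is the $pk\times(N-k+1)$ matrix whose $(i,j)$ block is $\sigma(i+j)$; $\sigma$ is persistently exciting of order $k$ if $H_k(\sigma)$ has full (row) rank. $H_1(\tilde x)$ is the first $n$ rows of $H_{T+1}(\tilde x)$. $\Gamma(\tilde x)=\{G\in\mathbb{R}^{(L-T)\times n}: H_1(\tilde x)G=I_n,\ \mathbf{1}_{L-T}^\top G=\mathbf{1}_n^\top\}$, $\Lambda(\tilde x)=\{\hat g\in\mathbb{R}^{L-T}: H_1(\tilde x)\hat g=\mathbf{0}_n,\ \mathbf{1}_{L-T}^\top\hat g=1\}$. *)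

theory Defs
  imports Complex_Main "Jordan_Normal_Form.DL_Rank"
begin

definition ones_vec :: "nat \<Rightarrow> real vec" where
  "ones_vec k = vec k (\<lambda>_. 1)"

definition full_row_rank :: "real mat \<Rightarrow> bool" where
  "full_row_rank M \<longleftrightarrow> vec_space.rank (dim_row M) M = dim_row M"

definition hankel :: "nat \<Rightarrow> nat \<Rightarrow> nat \<Rightarrow> (nat \<Rightarrow> real vec) \<Rightarrow> real mat" where
  "hankel p k N sig = mat (p * k) (N - k + 1) (\<lambda>(i, j). sig (i div p + j) $ (i mod p))"

definition persistently_exciting :: "nat \<Rightarrow> nat \<Rightarrow> nat \<Rightarrow> (nat \<Rightarrow> real vec) \<Rightarrow> bool" where
  "persistently_exciting p k N sig \<longleftrightarrow> full_row_rank (hankel p k N sig)"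

definition ctrb_matrix :: "nat \<Rightarrow> nat \<Rightarrow> real mat \<Rightarrow> real mat \<Rightarrow> real mat" where
  "ctrb_matrix n m A B = mat n (n * m) (\<lambda>(i, j). ((A ^\<^sub>m (j div m)) * B) $$ (i, j mod m))"

definition controllable :: "nat \<Rightarrow> nat \<Rightarrow> real mat \<Rightarrow> real mat \<Rightarrow> bool" where
  "controllable n m A B \<longleftrightarrow> vec_space.rank n (ctrb_matrix n m A B) = n"

definition stack :: "nat \<Rightarrow> nat \<Rightarrow> (nat \<Rightarrow> real vec) \<Rightarrow> real vec" where
  "stack q T z = vec (q * (T + 1)) (\<lambda>i. z (i div q) $ (i mod q))"

definition blockdiag :: "nat \<Rightarrow> real mat \<Rightarrow> real mat" where
  "blockdiag T H = mat (dim_row H * (T + 1)) (dim_col H * (T + 1))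
     (\<lambda>(i, j). if i div dim_row H = j div dim_col H
               then H $$ (i mod dim_row H, j mod dim_col H) else 0)"

definition vec_le :: "real vec \<Rightarrow> real vec \<Rightarrow> bool" where
  "vec_le v w \<longleftrightarrow> dim_vec v = dim_vec w \<and> (\<forall>i < dim_vec v. v $ i \<le> w $ i)"

datatype pkind = P1 | P2 | PInf

fun pnorm :: "pkind \<Rightarrow> real vec \<Rightarrow> real" where
  "pnorm P1 v = (\<Sum>i<dim_vec v. \<bar>v $ i\<bar>)"
| "pnorm P2 v = sqrt (\<Sum>i<dim_vec v. (v $ i)^2)"
| "pnorm PInf v = (if dim_vec v = 0 then 0 else Max ((\<lambda>i. \<bar>v $ i\<bar>) ` {..<dim_vec v}))"

definition cost :: "pkind \<Rightarrow> real mat \<Rightarrow> real mat \<Rightarrow> real mat \<Rightarrow> nat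
    \<Rightarrow> (nat \<Rightarrow> real vec) \<Rightarrow> (nat \<Rightarrow> real vec) \<Rightarrow> real" where
  "cost p P Q R T x u =
     pnorm p (P *\<^sub>v x T) + (\<Sum>t<T. pnorm p (Q *\<^sub>v x t) + pnorm p (R *\<^sub>v u t))"

definition sym_psd :: "nat \<Rightarrow> real mat \<Rightarrow> bool" where
  "sym_psd n M \<longleftrightarrow> M \<in> carrier_mat n n \<and> M\<^sup>T = M \<and> (\<forall>v \<in> carrier_vec n. v \<bullet> (M *\<^sub>v v) \<ge> 0)"

definition sym_pd :: "nat \<Rightarrow> real mat \<Rightarrow> bool" where
  "sym_pd n M \<longleftrightarrow> M \<in> carrier_mat n n \<and> M\<^sup>T = M \<and>
     (\<forall>v \<in> carrier_vec n. v \<noteq> 0\<^sub>v n \<longrightarrow> v \<bullet> (M *\<^sub>v v) > 0)"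

definition full_rank_sq :: "nat \<Rightarrow> real mat \<Rightarrow> bool" where
  "full_rank_sq n M \<longleftrightarrow> M \<in> carrier_mat n n \<and> vec_space.rank n M = n"

definition cost_ok :: "pkind \<Rightarrow> nat \<Rightarrow> nat \<Rightarrow> real mat \<Rightarrow> real mat \<Rightarrow> real mat \<Rightarrow> bool" where
  "cost_ok p n m P Q R \<longleftrightarrow>
     (if p = P2 then sym_psd n Q \<and> sym_pd m R \<and> sym_psd n P
      else full_rank_sq n Q \<and> full_rank_sq m R \<and> full_rank_sq n P)"

definition Gamma_set :: "nat \<Rightarrow> nat \<Rightarrow> nat \<Rightarrow> (nat \<Rightarrow> real vec) \<Rightarrow> real mat set" where
  "Gamma_set n T L xd = {G \<in> carrier_mat (L - T) n.
      mat_of_rows (L - T) (map (row (hankel n (T + 1) L xd)) [0..<n]) * G = 1\<^sub>m n \<and>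
      G\<^sup>T *\<^sub>v ones_vec (L - T) = ones_vec n}"

definition Lambda_set :: "nat \<Rightarrow> nat \<Rightarrow> nat \<Rightarrow> (nat \<Rightarrow> real vec) \<Rightarrow> real vec set" where
  "Lambda_set n T L xd = {g \<in> carrier_vec (L - T).
      mat_of_rows (L - T) (map (row (hankel n (T + 1) L xd)) [0..<n]) *\<^sub>v g = 0\<^sub>v n \<and>
      (ones_vec (L - T)) \<bullet> g = 1}"

definition GG_mat :: "nat \<Rightarrow> real mat \<Rightarrow> real vec \<Rightarrow> real mat" where
  "GG_mat n G g = mat (dim_row G) (n + 1) (\<lambda>(i, j). if j < n then G $$ (i, j) - g $ i else g $ i)"

definition feasible_P3 ::
  "nat \<Rightarrow> nat \<Rightarrow> nat \<Rightarrow> nat \<Rightarrow> (nat \<Rightarrow> real vec) \<Rightarrow> (nat \<Rightarrow> real vec)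
   \<Rightarrow> real mat \<Rightarrow> real mat \<Rightarrow> real vec \<Rightarrow> real vec \<Rightarrow> real vec set
   \<Rightarrow> (nat \<Rightarrow> real vec) \<Rightarrow> (nat \<Rightarrow> real vec) \<Rightarrow> bool" where
  "feasible_P3 n m T L xd ud Hx Hu h xinit XT x u \<longleftrightarrow>
     (\<forall>t\<le>T. x t \<in> carrier_vec n \<and> u t \<in> carrier_vec m) \<and>
     (\<exists>G g. G \<in> Gamma_set n T L xd \<and> g \<in> Lambda_set n T L xd \<and>
        stack n T x = hankel n (T + 1) L xd *\<^sub>v (GG_mat n G g *\<^sub>v (x 0 @\<^sub>v ones_vec 1)) \<and>
        stack m T u = hankel m (T + 1) L ud *\<^sub>v (GG_mat n G g *\<^sub>v (x 0 @\<^sub>v ones_vec 1))) \<and>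
     vec_le (blockdiag T Hx *\<^sub>v stack n T x + blockdiag T Hu *\<^sub>v stack m T u)
            (vec (dim_vec h * (T + 1)) (\<lambda>i. h $ (i mod dim_vec h))) \<and>
     x 0 = xinit \<and> x T \<in> XT"

definition feasible_MPC ::
  "nat \<Rightarrow> nat \<Rightarrow> nat \<Rightarrow> real mat \<Rightarrow> real mat \<Rightarrow> real vec
   \<Rightarrow> real mat \<Rightarrow> real mat \<Rightarrow> real vec \<Rightarrow> real vec \<Rightarrow> real vec set
   \<Rightarrow> (nat \<Rightarrow> real vec) \<Rightarrow> (nat \<Rightarrow> real vec) \<Rightarrow> bool" where
  "feasible_MPC n m T A B s Hx Hu h xinit XT x u \<longleftrightarrow>
     (\<forall>t\<le>T. x t \<in> carrier_vec n \<and> u t \<in> carrier_vec m) \<and>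
     (\<forall>t<T. x (Suc t) = A *\<^sub>v x t + B *\<^sub>v u t + s) \<and>
     (\<forall>t\<le>T. vec_le (Hx *\<^sub>v x t + Hu *\<^sub>v u t) h) \<and>
     x 0 = xinit \<and> x T \<in> XT"

definition is_optimal ::
  "((nat \<Rightarrow> real vec) \<Rightarrow> (nat \<Rightarrow> real vec) \<Rightarrow> bool)
   \<Rightarrow> ((nat \<Rightarrow> real vec) \<Rightarrow> (nat \<Rightarrow> real vec) \<Rightarrow> real)
   \<Rightarrow> (nat \<Rightarrow> real vec) \<Rightarrow> (nat \<Rightarrow> real vec) \<Rightarrow> bool" where
  "is_optimal F J x u \<longleftrightarrow> F x u \<and> (\<forall>x' u'. F x' u' \<longrightarrow> J x u \<le> J x' u')"

end

theory Submission
  imports Defs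
begin


lemma self_scalar_zero:
  fixes z :: "real vec"
  assumes "z \<in> carrier_vec r" "z \<bullet> z = 0"
  shows "z = 0\<^sub>v r"
proof -
  have "(\<Sum>i<r. z $ i * z $ i) = 0" using assms unfolding scalar_prod_def
    by (simp add: atLeast0LessThan)
  moreover have "\<forall>i\<in>{..<r}. 0 \<le> z $ i * z $ i" by simp
  ultimately have "\<forall>i\<in>{..<r}. z $ i * z $ i = 0"
    using sum_nonneg_eq_0_iff[of "{..<r}" "\<lambda>i. z $ i * z $ i"] by auto
  then show ?thesis using assms(1) by (intro eq_vecI) auto
qed

lemma rank_left_kernel:
  fixes M :: "real mat"
  assumes M: "M \<in> carrier_mat r c" and rk: "vec_space.rank r M = r"
    and z: "z \<in> carrier_vec r" and orth: "\<forall>j<c. col M j \<bullet> z = 0"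
  shows "z = 0\<^sub>v r"
proof -
  interpret vec_space "TYPE(real)" r .
  obtain S where max: "maximal S (\<lambda>T. T \<subseteq> set (cols M) \<and> lin_indpt T)"
    using maximal_exists[of "(\<lambda>T. T \<subseteq> set (cols M) \<and> lin_indpt T)" "card (set (cols M))" "{}"]
    by (meson List.finite_set card_mono empty_iff empty_subsetI finite_lin_indpt2 rev_finite_subset)
  have rS: "rank M = card S" using rank_card_indpt[OF M max] .
  have Ssub: "S \<subseteq> set (cols M)" and li: "lin_indpt S" using max unfolding maximal_def by auto
  have fin: "finite S" using Ssub finite_subset by blast
  have colsC: "set (cols M) \<subseteq> carrier_vec r" using M cols_dim by blast
  have SC: "S \<subseteq> carrier_vec r" using Ssub colsC by auto
  have "basis S"
    by (rule dim_li_is_basis[OF fin_dim fin SC li]) (use rS rk dim_is_n in auto)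
  then have span: "span S = carrier_vec r" unfolding basis_def by auto
  have zs: "z \<in> span S" using span z by simp
  obtain a where a: "lincomb a S = z"
    using finite_in_span[OF fin SC zs] by blast
  have "z \<bullet> z = lincomb a S \<bullet> z" using a by simp
  also have "\<dots> = (\<Sum>v\<in>S. (a v \<cdot>\<^sub>v v) \<bullet> z)"
    unfolding lincomb_def
    by (rule finsum_scalar_prod_sum) (use SC z in auto)
  also have "\<dots> = 0"
  proof (rule sum.neutral, rule ballI)
    fix v assume v: "v \<in> S"
    then obtain j where j: "j < c" "v = col M j"
      using Ssub M by (auto simp: cols_def in_set_conv_nth)
    have "v \<in> carrier_vec r" using v SC by auto
    then show "(a v \<cdot>\<^sub>v v) \<bullet> z = 0" using orth j z by simp
  qed
  finally show ?thesis using self_scalar_zero z by blast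
qed



lemma left_kernel_surj:
  fixes M :: "real mat"
  assumes M: "M \<in> carrier_mat r c"
    and lk: "\<forall>z\<in>carrier_vec r. M\<^sup>T *\<^sub>v z = 0\<^sub>v c \<longrightarrow> z = 0\<^sub>v r"
    and b: "b \<in> carrier_vec r"
  shows "\<exists>y \<in> carrier_vec c. M *\<^sub>v y = b"
proof -
  let ?K = "M * M\<^sup>T"
  have MT: "M\<^sup>T \<in> carrier_mat c r" using M by simp
  have K: "?K \<in> carrier_mat r r" using M by simp
  have "det ?K \<noteq> 0"
  proof
    assume "det ?K = 0"
    then obtain v where v: "v \<in> carrier_vec r" "v \<noteq> 0\<^sub>v r" "?K *\<^sub>v v = 0\<^sub>v r"
      using det_0_iff_vec_prod_zero[OF K] by blast
    have w: "M\<^sup>T *\<^sub>v v \<in> carrier_vec c" using MT v by simp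
    have "(M\<^sup>T *\<^sub>v v) \<bullet> (M\<^sup>T *\<^sub>v v) = v \<bullet> (M *\<^sub>v (M\<^sup>T *\<^sub>v v))"
      using transpose_vec_mult_scalar[OF M w v(1)] .
    also have "\<dots> = v \<bullet> (?K *\<^sub>v v)" using M MT v by simp
    also have "\<dots> = 0" using v by simp
    finally have "M\<^sup>T *\<^sub>v v = 0\<^sub>v c" using self_scalar_zero w by blast
    then show False using lk v by auto
  qed
  from det_non_zero_imp_unit[OF K this, of "()"]
  obtain Ki where Ki: "Ki \<in> carrier_mat r r" "?K * Ki = 1\<^sub>m r"
    unfolding Units_def ring_mat_def by auto
  define y where "y = M\<^sup>T *\<^sub>v (Ki *\<^sub>v b)"
  have y: "y \<in> carrier_vec c" using MT Ki b unfolding y_def by simp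
  have Kib: "Ki *\<^sub>v b \<in> carrier_vec r" using Ki b by simp
  have "M *\<^sub>v y = ?K *\<^sub>v (Ki *\<^sub>v b)"
    unfolding y_def using assoc_mult_mat_vec[OF M MT Kib] by simp
  also have "\<dots> = (?K * Ki) *\<^sub>v b" using assoc_mult_mat_vec[OF K Ki(1) b] by simp
  also have "\<dots> = b" using Ki b by simp
  finally show ?thesis using y by blast
qed

lemma exists_dependence:
  fixes \<kappa> :: "nat \<Rightarrow> real vec"
  assumes kc: "\<forall>t\<le>n. \<kappa> t \<in> carrier_vec n"
  shows "\<exists>c. (\<exists>t\<le>n. c t \<noteq> 0) \<and> (\<forall>i<n. (\<Sum>t\<le>n. c t * \<kappa> t $ i) = 0)"
proof -
  define Mt where "Mt = mat (Suc n) (Suc n) (\<lambda>(i,t). if i < n then \<kappa> t $ i else (0::real))"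
  have Mt: "Mt \<in> carrier_mat (Suc n) (Suc n)" unfolding Mt_def by simp
  have MtT: "Mt\<^sup>T \<in> carrier_mat (Suc n) (Suc n)" using Mt by simp
  have "Mt\<^sup>T *\<^sub>v unit_vec (Suc n) n = 0\<^sub>v (Suc n)"
  proof (rule eq_vecI)
    fix t assume "t < dim_vec (0\<^sub>v (Suc n) :: real vec)"
    then have t: "t < Suc n" by simp
    have "(Mt\<^sup>T *\<^sub>v unit_vec (Suc n) n) $ t = col Mt t \<bullet> unit_vec (Suc n) n"
      using t Mt by simp
    also have "\<dots> = col Mt t $ n" using t Mt by simp
    also have "\<dots> = 0" using t unfolding Mt_def by simp
    finally show "(Mt\<^sup>T *\<^sub>v unit_vec (Suc n) n) $ t = 0\<^sub>v (Suc n) $ t" using t by simp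
  qed (use Mt in simp)
  then have "det Mt\<^sup>T = 0"
    using det_0_iff_vec_prod_zero[OF MtT] unit_vec_nonzero[of n "Suc n"]
    by (metis lessI unit_vec_carrier)
  then have "det Mt = 0" using det_transpose[OF Mt] by simp
  then obtain v where v: "v \<in> carrier_vec (Suc n)" "v \<noteq> 0\<^sub>v (Suc n)" "Mt *\<^sub>v v = 0\<^sub>v (Suc n)"
    using det_0_iff_vec_prod_zero[OF Mt] by blast
  have "\<exists>t\<le>n. v $ t \<noteq> 0"
  proof (rule ccontr)
    assume "\<not> ?thesis"
    then have "v = 0\<^sub>v (Suc n)" using v(1) by (intro eq_vecI) auto
    then show False using v(2) by simp
  qed
  moreover have "\<forall>i<n. (\<Sum>t\<le>n. v $ t * \<kappa> t $ i) = 0"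
  proof (intro allI impI)
    fix i assume i: "i < n"
    have "0 = (Mt *\<^sub>v v) $ i" using v(3) i by simp
    also have "\<dots> = row Mt i \<bullet> v" using i Mt by simp
    also have "\<dots> = (\<Sum>t<Suc n. Mt $$ (i,t) * v $ t)"
      unfolding scalar_prod_def using v(1) Mt i by (intro sum.cong) auto
    also have "\<dots> = (\<Sum>t\<le>n. v $ t * \<kappa> t $ i)"
      unfolding lessThan_Suc_atMost[symmetric]
      by (rule sum.cong) (use i in \<open>auto simp: Mt_def\<close>)
    finally show "(\<Sum>t\<le>n. v $ t * \<kappa> t $ i) = 0" by simp
  qed
  ultimately show ?thesis by (intro exI[of _ "\<lambda>t. v $ t"]) auto
qed

lemma sum_split_add: "(\<Sum>r<(a::nat)+b. f r) = (\<Sum>r<a. f r) + (\<Sum>l<b. f (a+l))"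
  by (induction b) (auto simp: ac_simps)

lemma sum_divmod: "(\<Sum>r<(P::nat)*m. f r) = (\<Sum>q<P. \<Sum>l<m. f (q*m+l))"
proof (induction P)
  case 0 then show ?case by simp
next
  case (Suc P)
  have "(\<Sum>r<Suc P*m. f r) = (\<Sum>r<P*m + m. f r)" by (simp add: add.commute)
  also have "\<dots> = (\<Sum>r<P*m. f r) + (\<Sum>l<m. f (P*m+l))" by (rule sum_split_add)
  finally show ?case using Suc by simp
qed

lemma sum_R1:
  assumes "t \<le> (K::nat)"
  shows "(\<Sum>r<t. f r) = (\<Sum>q<K. if q < t then f q else 0)"
proof -
  have "(\<Sum>q<K. if q < t then f q else 0) = (\<Sum>q\<in>{..<K} \<inter> {q. q < t}. f q)"
    by (subst sum.inter_restrict) simp_all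
  also have "{..<K} \<inter> {q. q < t} = {..<t}" using assms by auto
  finally show ?thesis by simp
qed

lemma sum_R2:
  assumes "t + k \<le> (K::nat)"
  shows "(\<Sum>i<k. f i) = (\<Sum>q<K. if t \<le> q \<and> q - t < k then f (q - t) else 0)"
proof -
  have "(\<Sum>q<K. if t \<le> q \<and> q - t < k then f (q - t) else 0)
      = (\<Sum>q\<in>{..<K} \<inter> {q. t \<le> q \<and> q - t < k}. f (q - t))"
    by (subst sum.inter_restrict) simp_all
  also have "{..<K} \<inter> {q. t \<le> q \<and> q - t < k} = (\<lambda>i. t + i) ` {..<k}" 
  proof -
    have "\<And>q. q < K \<and> t \<le> q \<and> q - t < k \<Longrightarrow> q \<in> (\<lambda>i. t + i) ` {..<k}"
      by (rule_tac x="q - t" in image_eqI) auto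
    then show ?thesis using assms by auto
  qed
  also have "(\<Sum>q\<in>(\<lambda>i. t + i) ` {..<k}. f (q - t)) = (\<Sum>i<k. f i)"
    by (subst sum.reindex) (auto simp: inj_on_def)
  finally show ?thesis by simp
qed

lemma pow_mat_add:
  assumes "A \<in> carrier_mat n n"
  shows "A ^\<^sub>m a * A ^\<^sub>m b = A ^\<^sub>m (a + b)"
proof (induction b)
  case 0 then show ?case using assms by simp
next
  case (Suc b)
  have "A ^\<^sub>m a * A ^\<^sub>m Suc b = (A ^\<^sub>m a * A ^\<^sub>m b) * A"
    using assms by (simp add: assoc_mult_mat[of _ n n _ n _ n])
  then show ?case using Suc by simp
qed



locale lsys =
  fixes n m :: nat and A B :: "real mat" and s :: "real vec"
    and xd ud :: "nat \<Rightarrow> real vec" and L :: nat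
  assumes A: "A \<in> carrier_mat n n" and B: "B \<in> carrier_mat n m" and s: "s \<in> carrier_vec n"
    and dat: "\<forall>t<L. xd t \<in> carrier_vec n \<and> ud t \<in> carrier_vec m"
    and dyn: "\<forall>t. t + 1 < L \<longrightarrow> xd (t + 1) = A *\<^sub>v xd t + B *\<^sub>v ud t + s"
begin

lemma xdc: "t < L \<Longrightarrow> xd t \<in> carrier_vec n" using dat by auto
lemma udc: "t < L \<Longrightarrow> ud t \<in> carrier_vec m" using dat by auto

lemma expand:
  assumes xi: "\<xi> \<in> carrier_vec n"
  shows "j + t < L \<Longrightarrow> \<xi> \<bullet> xd (j+t) = \<xi> \<bullet> (A ^\<^sub>m t *\<^sub>v xd j)
      + (\<Sum>r<t. \<xi> \<bullet> (A ^\<^sub>m (t-1-r) *\<^sub>v (B *\<^sub>v ud (j+r))))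
      + (\<Sum>r<t. \<xi> \<bullet> (A ^\<^sub>m (t-1-r) *\<^sub>v s))"
proof (induction t arbitrary: j)
  case 0
  have "xd j \<in> carrier_vec n" using 0 xdc by simp
  then show ?case using A by simp
next
  case (Suc t)
  have jL: "j + 1 + t < L" using Suc.prems by simp
  note IH = Suc.IH[OF jL]
  have x1: "xd (j+1) = A *\<^sub>v xd j + B *\<^sub>v ud j + s" using dyn Suc.prems by simp
  have xj: "xd j \<in> carrier_vec n" and uj: "ud j \<in> carrier_vec m" using Suc.prems xdc udc by auto
  have P: "A ^\<^sub>m t \<in> carrier_mat n n" using A by simp
  have c1: "A *\<^sub>v xd j \<in> carrier_vec n" using A xj by simp
  have c2: "B *\<^sub>v ud j \<in> carrier_vec n" using B uj by simp
  have c12: "A *\<^sub>v xd j + B *\<^sub>v ud j \<in> carrier_vec n" using c1 c2 by simp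
  have "A ^\<^sub>m t *\<^sub>v xd (j+1) = A ^\<^sub>m t *\<^sub>v (A *\<^sub>v xd j + B *\<^sub>v ud j) + A ^\<^sub>m t *\<^sub>v s"
    unfolding x1 by (rule mult_add_distrib_mat_vec[OF P c12 s])
  also have "A ^\<^sub>m t *\<^sub>v (A *\<^sub>v xd j + B *\<^sub>v ud j) = A ^\<^sub>m t *\<^sub>v (A *\<^sub>v xd j) + A ^\<^sub>m t *\<^sub>v (B *\<^sub>v ud j)"
    by (rule mult_add_distrib_mat_vec[OF P c1 c2])
  also have "A ^\<^sub>m t *\<^sub>v (A *\<^sub>v xd j) = A ^\<^sub>m Suc t *\<^sub>v xd j"
    using assoc_mult_mat_vec[OF P A xj] by simp
  finally have e: "A ^\<^sub>m t *\<^sub>v xd (j+1) = A ^\<^sub>m Suc t *\<^sub>v xd j + A ^\<^sub>m t *\<^sub>v (B *\<^sub>v ud j) + A ^\<^sub>m t *\<^sub>v s" .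
  have d1: "A ^\<^sub>m Suc t *\<^sub>v xd j \<in> carrier_vec n" using A xj by (metis mult_mat_vec_carrier pow_carrier_mat)
  have d2: "A ^\<^sub>m t *\<^sub>v (B *\<^sub>v ud j) \<in> carrier_vec n" using P c2 by simp
  have d3: "A ^\<^sub>m t *\<^sub>v s \<in> carrier_vec n" using P s by simp
  have f: "\<xi> \<bullet> (A ^\<^sub>m t *\<^sub>v xd (j+1)) = \<xi> \<bullet> (A ^\<^sub>m Suc t *\<^sub>v xd j) + \<xi> \<bullet> (A ^\<^sub>m t *\<^sub>v (B *\<^sub>v ud j)) + \<xi> \<bullet> (A ^\<^sub>m t *\<^sub>v s)"
    unfolding e using xi d1 d2 d3 by (simp add: scalar_prod_add_distrib)
  have g1: "(\<Sum>r<Suc t. \<xi> \<bullet> (A ^\<^sub>m (Suc t-1-r) *\<^sub>v (B *\<^sub>v ud (j+r))))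
     = \<xi> \<bullet> (A ^\<^sub>m t *\<^sub>v (B *\<^sub>v ud j)) + (\<Sum>r<t. \<xi> \<bullet> (A ^\<^sub>m (t-1-r) *\<^sub>v (B *\<^sub>v ud (j+1+r))))"
    unfolding sum.lessThan_Suc_shift by simp
  have g2: "(\<Sum>r<Suc t. \<xi> \<bullet> (A ^\<^sub>m (Suc t-1-r) *\<^sub>v s))
     = \<xi> \<bullet> (A ^\<^sub>m t *\<^sub>v s) + (\<Sum>r<t. \<xi> \<bullet> (A ^\<^sub>m (t-1-r) *\<^sub>v s))"
    unfolding sum.lessThan_Suc_shift by simp
  have "\<xi> \<bullet> xd (j + Suc t) = \<xi> \<bullet> xd (j + 1 + t)" by simp
  also have "\<dots> = \<xi> \<bullet> (A ^\<^sub>m t *\<^sub>v xd (j+1))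
      + (\<Sum>r<t. \<xi> \<bullet> (A ^\<^sub>m (t-1-r) *\<^sub>v (B *\<^sub>v ud (j+1+r))))
      + (\<Sum>r<t. \<xi> \<bullet> (A ^\<^sub>m (t-1-r) *\<^sub>v s))" using IH by simp
  finally show ?case unfolding g1 g2 f by simp
qed

lemma psi_eq:
  assumes xi: "\<xi> \<in> carrier_vec n" and u: "u \<in> carrier_vec m"
  shows "\<xi> \<bullet> (A ^\<^sub>m p *\<^sub>v (B *\<^sub>v u)) = (\<Sum>l<m. ((A ^\<^sub>m p * B)\<^sup>T *\<^sub>v \<xi>) $ l * u $ l)"
proof -
  have P: "A ^\<^sub>m p \<in> carrier_mat n n" using A by simp
  have PB: "A ^\<^sub>m p * B \<in> carrier_mat n m" using P B by simp
  have "\<xi> \<bullet> (A ^\<^sub>m p *\<^sub>v (B *\<^sub>v u)) = \<xi> \<bullet> ((A ^\<^sub>m p * B) *\<^sub>v u)"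
    using assoc_mult_mat_vec[OF P B u] by simp
  also have "\<dots> = ((A ^\<^sub>m p * B)\<^sup>T *\<^sub>v \<xi>) \<bullet> u"
    using transpose_vec_mult_scalar[OF PB u xi] by simp
  also have "\<dots> = (\<Sum>l<m. ((A ^\<^sub>m p * B)\<^sup>T *\<^sub>v \<xi>) $ l * u $ l)"
    unfolding scalar_prod_def using u by (simp add: atLeast0LessThan)
  finally show ?thesis .
qed

lemma psi_unit:
  assumes xi: "\<xi> \<in> carrier_vec n" and l: "l < m"
  shows "\<xi> \<bullet> (A ^\<^sub>m t *\<^sub>v ((A ^\<^sub>m p * B) *\<^sub>v unit_vec m l)) = ((A ^\<^sub>m (t+p) * B)\<^sup>T *\<^sub>v \<xi>) $ l"
proof -
  have Pt: "A ^\<^sub>m t \<in> carrier_mat n n" and Pp: "A ^\<^sub>m p \<in> carrier_mat n n" using A by auto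
  have PB: "A ^\<^sub>m p * B \<in> carrier_mat n m" using Pp B by simp
  have PB2: "A ^\<^sub>m (t+p) * B \<in> carrier_mat n m" using A B by (metis mult_carrier_mat pow_carrier_mat)
  have e: "unit_vec m l \<in> carrier_vec m" by simp
  have "A ^\<^sub>m t *\<^sub>v ((A ^\<^sub>m p * B) *\<^sub>v unit_vec m l) = (A ^\<^sub>m t * (A ^\<^sub>m p * B)) *\<^sub>v unit_vec m l"
    using assoc_mult_mat_vec[OF Pt PB e] by simp
  also have "A ^\<^sub>m t * (A ^\<^sub>m p * B) = A ^\<^sub>m (t+p) * B"
    using assoc_mult_mat[OF Pt Pp B] pow_mat_add[OF A] by simp
  finally have "\<xi> \<bullet> (A ^\<^sub>m t *\<^sub>v ((A ^\<^sub>m p * B) *\<^sub>v unit_vec m l)) = \<xi> \<bullet> ((A ^\<^sub>m (t+p) * B) *\<^sub>v unit_vec m l)"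
    by simp
  also have "\<dots> = ((A ^\<^sub>m (t+p) * B)\<^sup>T *\<^sub>v \<xi>) \<bullet> unit_vec m l"
    using transpose_vec_mult_scalar[OF PB2 e xi] by simp
  also have "\<dots> = ((A ^\<^sub>m (t+p) * B)\<^sup>T *\<^sub>v \<xi>) $ l"
    using l PB2 xi by simp
  finally show ?thesis .
qed

lemma krylov:
  assumes xi: "\<xi> \<in> carrier_vec n"
  shows "\<exists>a D. D \<le> n \<and> a D = 1 \<and> (\<forall>v\<in>carrier_vec n. (\<Sum>t\<le>D. a t * (\<xi> \<bullet> (A ^\<^sub>m t *\<^sub>v v))) = 0)"
proof -
  define \<kappa> where "\<kappa> t = (A ^\<^sub>m t)\<^sup>T *\<^sub>v \<xi>" for t
  have kc: "\<forall>t\<le>n. \<kappa> t \<in> carrier_vec n" unfolding \<kappa>_def using A xi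
    by (metis mult_mat_vec_carrier pow_carrier_mat transpose_carrier_mat)
  obtain c where c: "\<exists>t\<le>n. c t \<noteq> 0" "\<forall>i<n. (\<Sum>t\<le>n. c t * \<kappa> t $ i) = 0"
    using exists_dependence[OF kc] by blast
  define S where "S = {t. t \<le> n \<and> c t \<noteq> 0}"
  have Sfin: "finite S" and Sne: "S \<noteq> {}" unfolding S_def using c(1) by auto
  define D where "D = Max S"
  have DS: "D \<in> S" unfolding D_def using Max_in[OF Sfin Sne] .
  have Dn: "D \<le> n" and cD: "c D \<noteq> 0" using DS unfolding S_def by auto
  have above: "\<And>t. D < t \<Longrightarrow> t \<le> n \<Longrightarrow> c t = 0"
  proof (rule ccontr)
    fix t assume "D < t" "t \<le> n" "c t \<noteq> 0"
    then have "t \<in> S" unfolding S_def by auto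
    then have "t \<le> D" unfolding D_def using Max_ge[OF Sfin] by auto
    then show False using \<open>D < t\<close> by simp
  qed
  define a where "a t = c t / c D" for t
  have aD: "a D = 1" unfolding a_def using cD by simp
  have "\<forall>v\<in>carrier_vec n. (\<Sum>t\<le>D. a t * (\<xi> \<bullet> (A ^\<^sub>m t *\<^sub>v v))) = 0"
  proof
    fix v :: "real vec" assume v: "v \<in> carrier_vec n"
    have tr: "\<xi> \<bullet> (A ^\<^sub>m t *\<^sub>v v) = (\<Sum>i<n. \<kappa> t $ i * v $ i)" for t
    proof -
      have P: "A ^\<^sub>m t \<in> carrier_mat n n" using A by simp
      have "\<xi> \<bullet> (A ^\<^sub>m t *\<^sub>v v) = \<kappa> t \<bullet> v"
        unfolding \<kappa>_def using transpose_vec_mult_scalar[OF P v xi] by simp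
      then show ?thesis unfolding scalar_prod_def using v by (simp add: atLeast0LessThan)
    qed
    have "(\<Sum>t\<le>D. c t * (\<xi> \<bullet> (A ^\<^sub>m t *\<^sub>v v))) = (\<Sum>t\<le>n. c t * (\<xi> \<bullet> (A ^\<^sub>m t *\<^sub>v v)))"
      by (rule sum.mono_neutral_left) (use Dn above in auto)
    also have "\<dots> = (\<Sum>t\<le>n. \<Sum>i<n. c t * \<kappa> t $ i * v $ i)"
      unfolding tr by (simp add: sum_distrib_left mult.assoc)
    also have "\<dots> = (\<Sum>i<n. \<Sum>t\<le>n. c t * \<kappa> t $ i * v $ i)" by (rule sum.swap)
    also have "\<dots> = (\<Sum>i<n. (\<Sum>t\<le>n. c t * \<kappa> t $ i) * v $ i)" by (simp add: sum_distrib_right)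
    also have "\<dots> = 0" using c(2) by simp
    finally have z: "(\<Sum>t\<le>D. c t * (\<xi> \<bullet> (A ^\<^sub>m t *\<^sub>v v))) = 0" .
    have "(\<Sum>t\<le>D. a t * (\<xi> \<bullet> (A ^\<^sub>m t *\<^sub>v v))) = (\<Sum>t\<le>D. c t * (\<xi> \<bullet> (A ^\<^sub>m t *\<^sub>v v))) / c D"
      unfolding a_def by (simp add: sum_divide_distrib)
    then show "(\<Sum>t\<le>D. a t * (\<xi> \<bullet> (A ^\<^sub>m t *\<^sub>v v))) = 0" using z by simp
  qed
  then show ?thesis using Dn aD by blast
qed

end

lemma if_sum_helper: "(a::real) * (if P then (\<Sum>l<m. g l * U l) else 0) = (\<Sum>l<m. a * (if P then g l else 0) * U l)"
  by (cases P) (simp_all add: sum_distrib_left mult.assoc)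

lemma regroup1:
  fixes a :: "nat \<Rightarrow> real" and \<psi> U :: "nat \<Rightarrow> nat \<Rightarrow> real"
  assumes "D \<le> K"
  shows "(\<Sum>t\<le>D. a t * (\<Sum>r<t. \<Sum>l<m. \<psi> (t-1-r) l * U r l))
       = (\<Sum>q<K. \<Sum>l<m. (\<Sum>t\<le>D. a t * (if q < t then \<psi> (t-1-q) l else 0)) * U q l)"
proof -
  have "(\<Sum>t\<le>D. a t * (\<Sum>r<t. \<Sum>l<m. \<psi> (t-1-r) l * U r l))
      = (\<Sum>t\<le>D. a t * (\<Sum>q<K. if q < t then (\<Sum>l<m. \<psi> (t-1-q) l * U q l) else 0))"
    by (intro sum.cong refl arg_cong[where f="\<lambda>x. _ * x"] sum_R1) (use assms in auto)
  also have "\<dots> = (\<Sum>t\<le>D. \<Sum>q<K. \<Sum>l<m. a t * (if q < t then \<psi> (t-1-q) l else 0) * U q l)"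
    by (rule sum.cong[OF refl], subst sum_distrib_left, rule sum.cong[OF refl], rule if_sum_helper)
  also have "\<dots> = (\<Sum>q<K. \<Sum>t\<le>D. \<Sum>l<m. a t * (if q < t then \<psi> (t-1-q) l else 0) * U q l)"
    by (rule sum.swap)
  also have "\<dots> = (\<Sum>q<K. \<Sum>l<m. \<Sum>t\<le>D. a t * (if q < t then \<psi> (t-1-q) l else 0) * U q l)"
    by (rule sum.cong[OF refl], rule sum.swap)
  also have "\<dots> = (\<Sum>q<K. \<Sum>l<m. (\<Sum>t\<le>D. a t * (if q < t then \<psi> (t-1-q) l else 0)) * U q l)"
    by (simp add: sum_distrib_right)
  finally show ?thesis .
qed

lemma regroup2:
  fixes a :: "nat \<Rightarrow> real" and \<eta> U :: "nat \<Rightarrow> nat \<Rightarrow> real"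
  assumes "D + k \<le> K"
  shows "(\<Sum>t\<le>D. a t * (\<Sum>i<k. \<Sum>l<m. \<eta> i l * U (t+i) l))
       = (\<Sum>q<K. \<Sum>l<m. (\<Sum>t\<le>D. a t * (if t \<le> q \<and> q - t < k then \<eta> (q-t) l else 0)) * U q l)"
proof -
  have "(\<Sum>t\<le>D. a t * (\<Sum>i<k. \<Sum>l<m. \<eta> i l * U (t+i) l))
      = (\<Sum>t\<le>D. a t * (\<Sum>q<K. if t \<le> q \<and> q - t < k then (\<Sum>l<m. \<eta> (q-t) l * U (t+(q-t)) l) else 0))"
    by (intro sum.cong refl arg_cong[where f="\<lambda>x. _ * x"] sum_R2) (use assms in auto)
  also have "\<dots> = (\<Sum>t\<le>D. a t * (\<Sum>q<K. if t \<le> q \<and> q - t < k then (\<Sum>l<m. \<eta> (q-t) l * U q l) else 0))"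
    by (intro sum.cong refl arg_cong[where f="\<lambda>x. _ * x"]) auto
  also have "\<dots> = (\<Sum>t\<le>D. \<Sum>q<K. \<Sum>l<m. a t * (if t \<le> q \<and> q - t < k then \<eta> (q-t) l else 0) * U q l)"
    by (rule sum.cong[OF refl], subst sum_distrib_left, rule sum.cong[OF refl], rule if_sum_helper)
  also have "\<dots> = (\<Sum>q<K. \<Sum>t\<le>D. \<Sum>l<m. a t * (if t \<le> q \<and> q - t < k then \<eta> (q-t) l else 0) * U q l)"
    by (rule sum.swap)
  also have "\<dots> = (\<Sum>q<K. \<Sum>l<m. \<Sum>t\<le>D. a t * (if t \<le> q \<and> q - t < k then \<eta> (q-t) l else 0) * U q l)"
    by (rule sum.cong[OF refl], rule sum.swap)
  also have "\<dots> = (\<Sum>q<K. \<Sum>l<m. (\<Sum>t\<le>D. a t * (if t \<le> q \<and> q - t < k then \<eta> (q-t) l else 0)) * U q l)"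
    by (simp add: sum_distrib_right)
  finally show ?thesis .
qed



lemma PE_kill:
  fixes ud :: "nat \<Rightarrow> real vec" and W :: "nat \<Rightarrow> nat \<Rightarrow> real" and \<gamma> :: real
  assumes m: "m > 0" and PE: "persistently_exciting m P L ud"
    and udc: "\<forall>t<L. ud t \<in> carrier_vec m" and KP: "K < P" and P2: "2 \<le> P"
    and rel: "\<forall>j. j + K \<le> L \<longrightarrow> (\<Sum>q<K. \<Sum>l<m. W q l * ud (j+q) $ l) + \<gamma> = 0"
  shows "\<forall>q<K. \<forall>l<m. W q l = 0"
proof -
  define H where "H = hankel m P L ud"
  have H: "H \<in> carrier_mat (m*P) (L - P + 1)" unfolding H_def hankel_def by simp
  have rk: "vec_space.rank (m*P) H = m*P"
    using PE H unfolding persistently_exciting_def full_row_rank_def H_def by simp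
  have PL: "P \<le> L"
  proof (rule ccontr)
    assume "\<not> P \<le> L"
    then have "L - P + 1 = 1" by simp
    then have "m * P \<le> 1" using vec_space.rank_le_nc[OF H] rk by simp
    moreover have "P \<le> m * P" using m by (cases m) auto
    then have "m * P \<ge> 2" using P2 by linarith
    ultimately show False by simp
  qed
  define V where "V q l = (if 1 \<le> q \<and> q - 1 < K then W (q-1) l else 0) - (if q < K then W q l else 0)" for q l
  define z where "z = vec (m*P) (\<lambda>r. V (r div m) (r mod m))"
  have z: "z \<in> carrier_vec (m*P)" unfolding z_def by simp
  have orth: "\<forall>j<L - P + 1. col H j \<bullet> z = 0"
  proof (intro allI impI)
    fix j assume j: "j < L - P + 1"
    then have jP: "j + P \<le> L" using PL by simp
    define U where "U q l = ud (j+q) $ l" for q l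
    have "col H j \<bullet> z = (\<Sum>r<P*m. H $$ (r,j) * z $ r)"
      unfolding scalar_prod_def using z H j by (simp add: atLeast0LessThan mult.commute)
    also have "\<dots> = (\<Sum>q<P. \<Sum>l<m. H $$ (q*m+l, j) * z $ (q*m+l))" by (rule sum_divmod)
    also have "\<dots> = (\<Sum>q<P. \<Sum>l<m. U q l * V q l)"
    proof (intro sum.cong refl)
      fix q l assume q: "q \<in> {..<P}" and l: "l \<in> {..<m}"
      have r: "q*m+l < m*P" using q l
        by (metis lessThan_iff add.commute mult.commute mult_Suc_right nat_add_left_cancel_less
            less_le_trans mult_le_mono2 Suc_leI)
      have d: "(q*m+l) div m = q" and mo: "(q*m+l) mod m = l" using l by auto
      show "H $$ (q*m+l, j) * z $ (q*m+l) = U q l * V q l"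
        using r j d mo unfolding H_def hankel_def z_def U_def by (simp add: add.commute)
    qed
    also have "\<dots> = (\<Sum>q<P. \<Sum>l<m. (if 1 \<le> q \<and> q - 1 < K then W (q-1) l else 0) * U q l)
                 - (\<Sum>q<P. \<Sum>l<m. (if q < K then W q l else 0) * U q l)"
      unfolding V_def by (simp add: sum_subtractf algebra_simps)
    also have "(\<Sum>q<P. \<Sum>l<m. (if 1 \<le> q \<and> q - 1 < K then W (q-1) l else 0) * U q l)
        = (\<Sum>q<K. \<Sum>l<m. W q l * U (Suc q) l)"
    proof -
      obtain P' where P': "P = Suc P'" using P2 by (cases P) auto
      have "(\<Sum>q<P. \<Sum>l<m. (if 1 \<le> q \<and> q - 1 < K then W (q-1) l else 0) * U q l)
          = (\<Sum>q<P'. \<Sum>l<m. (if q < K then W q l else 0) * U (Suc q) l)"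
        unfolding P' sum.lessThan_Suc_shift by (simp, intro sum.cong refl, simp)
      also have "\<dots> = (\<Sum>q<P'. if q < K then (\<Sum>l<m. W q l * U (Suc q) l) else 0)"
        by (intro sum.cong refl) auto
      also have "\<dots> = (\<Sum>q<K. \<Sum>l<m. W q l * U (Suc q) l)"
        using sum_R1[of K P' "\<lambda>q. \<Sum>l<m. W q l * U (Suc q) l"] KP P' by simp
      finally show ?thesis .
    qed
    also have "(\<Sum>q<K. \<Sum>l<m. W q l * U (Suc q) l) = - \<gamma>"
      using rel[rule_format, of "Suc j"] jP KP unfolding U_def by simp
    also have "(\<Sum>q<P. \<Sum>l<m. (if q < K then W q l else 0) * U q l) = (\<Sum>q<K. \<Sum>l<m. W q l * U q l)"
    proof -
      have "(\<Sum>q<P. \<Sum>l<m. (if q < K then W q l else 0) * U q l)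
          = (\<Sum>q<P. if q < K then (\<Sum>l<m. W q l * U q l) else 0)"
        by (intro sum.cong refl) auto
      also have "\<dots> = (\<Sum>q<K. \<Sum>l<m. W q l * U q l)"
        using sum_R1[of K P "\<lambda>q. \<Sum>l<m. W q l * U q l"] KP by simp
      finally show ?thesis .
    qed
    also have "(\<Sum>q<K. \<Sum>l<m. W q l * U q l) = - \<gamma>"
      using rel[rule_format, of j] jP KP unfolding U_def by simp
    finally show "col H j \<bullet> z = 0" by simp
  qed
  have z0: "z = 0\<^sub>v (m*P)" by (rule rank_left_kernel[OF H rk z orth])
  have V0: "V q l = 0" if q: "q < P" and l: "l < m" for q l
  proof -
    have r: "q*m+l < m*P" using q l
      by (metis add.commute mult.commute mult_Suc_right nat_add_left_cancel_less
          less_le_trans mult_le_mono2 Suc_leI)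
    have "z $ (q*m+l) = V q l" unfolding z_def using r l by simp
    then show ?thesis using z0 r by simp
  qed
  show ?thesis
  proof (intro allI impI)
    fix q l assume q: "q < K" and l: "l < m"
    from q show "W q l = 0"
    proof (induction q)
      case 0
      then show ?case using V0[of 0 l] KP l unfolding V_def by simp
    next
      case (Suc q)
      then have "W q l = 0" by simp
      then show ?case using V0[of "Suc q" l] KP l Suc.prems unfolding V_def by simp
    qed
  qed
qed



lemma PE_len:
  fixes ud :: "nat \<Rightarrow> real vec"
  assumes m: "m > 0" and PE: "persistently_exciting m P L ud" and P2: "2 \<le> P"
  shows "P \<le> L"
proof (rule ccontr)
  define H where "H = hankel m P L ud"
  have H: "H \<in> carrier_mat (m*P) (L - P + 1)" unfolding H_def hankel_def by simp
  have rk: "vec_space.rank (m*P) H = m*P"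
    using PE H unfolding persistently_exciting_def full_row_rank_def H_def by simp
  assume "\<not> P \<le> L"
  then have "L - P + 1 = 1" by simp
  then have "m * P \<le> 1" using vec_space.rank_le_nc[OF H] rk by simp
  moreover have "P \<le> m * P" using m by (cases m) auto
  then have "m * P \<ge> 2" using P2 by linarith
  ultimately show False by simp
qed

lemma col_ctrb:
  assumes A: "A \<in> carrier_mat n n" and B: "B \<in> carrier_mat n m" and j: "j < n * m" and m: "m > 0"
  shows "col (ctrb_matrix n m A B) j = col (A ^\<^sub>m (j div m) * B) (j mod m)"
proof -
  have P: "A ^\<^sub>m (j div m) * B \<in> carrier_mat n m" using A B by (metis mult_carrier_mat pow_carrier_mat)
  have jm: "j mod m < m" using m by simp
  show ?thesis
    unfolding ctrb_matrix_def col_def using j P jm A by (intro eq_vecI) auto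
qed

context lsys
begin

lemma FL_core:
  fixes \<xi> :: "real vec" and \<eta> :: "nat \<Rightarrow> nat \<Rightarrow> real" and \<beta> :: real and k :: nat
  assumes m: "m > 0" and k: "k > 0"
    and ctrb: "controllable n m A B"
    and PE: "persistently_exciting m (n + k + 1) L ud"
    and xi: "\<xi> \<in> carrier_vec n"
    and rel: "\<forall>j. j + k \<le> L \<longrightarrow> \<xi> \<bullet> xd j + (\<Sum>i<k. \<Sum>l<m. \<eta> i l * ud (j+i) $ l) + \<beta> = 0"
  shows "\<xi> = 0\<^sub>v n \<and> (\<forall>i<k. \<forall>l<m. \<eta> i l = 0) \<and> \<beta> = 0"
proof -
  obtain a D where D: "D \<le> n" and aD: "a D = 1"
    and kry: "\<forall>v\<in>carrier_vec n. (\<Sum>t\<le>D. a t * (\<xi> \<bullet> (A ^\<^sub>m t *\<^sub>v v))) = 0"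
    using krylov[OF xi] by blast
  define \<psi> where "\<psi> p l = ((A ^\<^sub>m p * B)\<^sup>T *\<^sub>v \<xi>) $ l" for p l
  define K where "K = k + D"
  define W1 where "W1 q l = (\<Sum>t\<le>D. a t * (if q < t then \<psi> (t-1-q) l else 0))" for q l
  define W2 where "W2 q l = (\<Sum>t\<le>D. a t * (if t \<le> q \<and> q - t < k then \<eta> (q-t) l else 0))" for q l
  define W where "W q l = W1 q l + W2 q l" for q l
  define \<gamma> where "\<gamma> = (\<Sum>t\<le>D. a t * ((\<Sum>r<t. \<xi> \<bullet> (A ^\<^sub>m (t-1-r) *\<^sub>v s)) + \<beta>))"
  have LL: "n + k + 1 \<le> L" using PE_len[OF m PE] k by simp
  have comb: "\<forall>j. j + K \<le> L \<longrightarrow> (\<Sum>q<K. \<Sum>l<m. W q l * ud (j+q) $ l) + \<gamma> = 0"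
  proof (intro allI impI)
    fix j assume jK: "j + K \<le> L"
    define U where "U q l = ud (j+q) $ l" for q l
    have xj: "xd j \<in> carrier_vec n" using xdc jK k unfolding K_def by simp
    have e1: "\<xi> \<bullet> xd (j+t) = \<xi> \<bullet> (A ^\<^sub>m t *\<^sub>v xd j) + (\<Sum>r<t. \<Sum>l<m. \<psi> (t-1-r) l * U r l)
        + (\<Sum>r<t. \<xi> \<bullet> (A ^\<^sub>m (t-1-r) *\<^sub>v s))" if t: "t \<le> D" for t
    proof -
      have jt: "j + t < L" using jK t k unfolding K_def by simp
      have "(\<Sum>r<t. \<xi> \<bullet> (A ^\<^sub>m (t-1-r) *\<^sub>v (B *\<^sub>v ud (j+r)))) = (\<Sum>r<t. \<Sum>l<m. \<psi> (t-1-r) l * U r l)"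
      proof (intro sum.cong refl)
        fix r assume "r \<in> {..<t}"
        then have "ud (j+r) \<in> carrier_vec m" using udc jt by simp
        then show "\<xi> \<bullet> (A ^\<^sub>m (t-1-r) *\<^sub>v (B *\<^sub>v ud (j+r))) = (\<Sum>l<m. \<psi> (t-1-r) l * U r l)"
          unfolding \<psi>_def U_def using psi_eq[OF xi] by simp
      qed
      then show ?thesis using expand[OF xi jt] by simp
    qed
    have "0 = (\<Sum>t\<le>D. a t * (\<xi> \<bullet> xd (j+t) + (\<Sum>i<k. \<Sum>l<m. \<eta> i l * ud (j+t+i) $ l) + \<beta>))"
    proof -
      have "\<forall>t\<in>{..D}. \<xi> \<bullet> xd (j+t) + (\<Sum>i<k. \<Sum>l<m. \<eta> i l * ud (j+t+i) $ l) + \<beta> = 0"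
        using rel jK unfolding K_def by auto
      then show ?thesis by simp
    qed
    also have "\<dots> = (\<Sum>t\<le>D. a t * (\<xi> \<bullet> (A ^\<^sub>m t *\<^sub>v xd j)) + a t * (\<Sum>r<t. \<Sum>l<m. \<psi> (t-1-r) l * U r l)
        + a t * (\<Sum>i<k. \<Sum>l<m. \<eta> i l * U (t+i) l) + a t * ((\<Sum>r<t. \<xi> \<bullet> (A ^\<^sub>m (t-1-r) *\<^sub>v s)) + \<beta>))"
    proof (intro sum.cong refl)
      fix t assume "t \<in> {..D}"
      then have t: "t \<le> D" by simp
      have "(\<Sum>i<k. \<Sum>l<m. \<eta> i l * ud (j+t+i) $ l) = (\<Sum>i<k. \<Sum>l<m. \<eta> i l * U (t+i) l)"
        unfolding U_def by (simp add: add.assoc)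
      then show "a t * (\<xi> \<bullet> xd (j+t) + (\<Sum>i<k. \<Sum>l<m. \<eta> i l * ud (j+t+i) $ l) + \<beta>) =
        a t * (\<xi> \<bullet> (A ^\<^sub>m t *\<^sub>v xd j)) + a t * (\<Sum>r<t. \<Sum>l<m. \<psi> (t-1-r) l * U r l)
        + a t * (\<Sum>i<k. \<Sum>l<m. \<eta> i l * U (t+i) l) + a t * ((\<Sum>r<t. \<xi> \<bullet> (A ^\<^sub>m (t-1-r) *\<^sub>v s)) + \<beta>)"
        using e1[OF t] by (simp add: algebra_simps)
    qed
    also have "\<dots> = (\<Sum>t\<le>D. a t * (\<xi> \<bullet> (A ^\<^sub>m t *\<^sub>v xd j))) + (\<Sum>t\<le>D. a t * (\<Sum>r<t. \<Sum>l<m. \<psi> (t-1-r) l * U r l))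
        + (\<Sum>t\<le>D. a t * (\<Sum>i<k. \<Sum>l<m. \<eta> i l * U (t+i) l)) + \<gamma>"
      unfolding \<gamma>_def by (simp add: sum.distrib)
    also have "(\<Sum>t\<le>D. a t * (\<xi> \<bullet> (A ^\<^sub>m t *\<^sub>v xd j))) = 0" using kry xj by simp
    also have "(\<Sum>t\<le>D. a t * (\<Sum>r<t. \<Sum>l<m. \<psi> (t-1-r) l * U r l)) = (\<Sum>q<K. \<Sum>l<m. W1 q l * U q l)"
      unfolding W1_def by (rule regroup1) (simp add: K_def)
    also have "(\<Sum>t\<le>D. a t * (\<Sum>i<k. \<Sum>l<m. \<eta> i l * U (t+i) l)) = (\<Sum>q<K. \<Sum>l<m. W2 q l * U q l)"
      unfolding W2_def by (rule regroup2) (simp add: K_def)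
    finally have "0 = (\<Sum>q<K. \<Sum>l<m. W1 q l * U q l) + (\<Sum>q<K. \<Sum>l<m. W2 q l * U q l) + \<gamma>" by simp
    also have "(\<Sum>q<K. \<Sum>l<m. W1 q l * U q l) + (\<Sum>q<K. \<Sum>l<m. W2 q l * U q l) = (\<Sum>q<K. \<Sum>l<m. W q l * U q l)"
      unfolding W_def by (simp add: sum.distrib algebra_simps)
    finally show "(\<Sum>q<K. \<Sum>l<m. W q l * ud (j+q) $ l) + \<gamma> = 0" unfolding U_def by simp
  qed
  have W0: "\<forall>q<K. \<forall>l<m. W q l = 0"
    by (rule PE_kill[OF m PE _ _ _ comb]) (use dat D k in \<open>auto simp: K_def\<close>)
  have E1: "\<forall>i<k. \<forall>l<m. \<eta> i l = 0"
  proof (intro allI impI)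
    fix i l assume i: "i < k" and l: "l < m"
    have "\<forall>i. k - i = d \<longrightarrow> i < k \<longrightarrow> \<eta> i l = 0" for d
    proof (induction d rule: less_induct)
      case (less d)
      show ?case
      proof (intro allI impI)
        fix i assume id: "k - i = d" and ik: "i < k"
        have IH: "\<eta> i' l = 0" if "i < i'" "i' < k" for i'
          using less.IH[of "k - i'"] id ik that by auto
        have "W1 (D+i) l = 0" unfolding W1_def by (intro sum.neutral) auto
        moreover have "W2 (D+i) l = \<eta> i l"
        proof -
          have "W2 (D+i) l = (\<Sum>t\<in>insert D {..<D}. a t * (if t \<le> D+i \<and> D+i - t < k then \<eta> (D+i-t) l else 0))"
            unfolding W2_def by (intro sum.cong refl) auto
          also have "\<dots> = a D * (if D \<le> D+i \<and> D+i - D < k then \<eta> (D+i-D) l else 0)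
              + (\<Sum>t<D. a t * (if t \<le> D+i \<and> D+i - t < k then \<eta> (D+i-t) l else 0))"
            by simp
          also have "(\<Sum>t<D. a t * (if t \<le> D+i \<and> D+i - t < k then \<eta> (D+i-t) l else 0)) = 0"
            by (intro sum.neutral) (auto intro!: IH)
          finally show ?thesis using aD ik by simp
        qed
        moreover have "W (D+i) l = 0" using W0 ik l unfolding K_def by simp
        ultimately show "\<eta> i l = 0" unfolding W_def by simp
      qed
    qed
    then show "\<eta> i l = 0" using i by simp
  qed
  have E2: "\<forall>l<m. \<psi> r l = 0" for r
  proof (induction r rule: less_induct)
    case (less r)
    show ?case
    proof (intro allI impI)
      fix l assume l: "l < m"
      show "\<psi> r l = 0"
      proof (cases "r < D")
        case True
        define q where "q = D - 1 - r"
        have qD: "q < D" and rq: "D - 1 - q = r" using True unfolding q_def by auto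
        have "W2 q l = 0" unfolding W2_def using E1 l by (intro sum.neutral) auto
        moreover have "W q l = 0" using W0 l qD unfolding K_def by simp
        ultimately have w1: "W1 q l = 0" unfolding W_def by simp
        have "W1 q l = (\<Sum>t\<in>insert D {..<D}. a t * (if q < t then \<psi> (t-1-q) l else 0))"
          unfolding W1_def by (intro sum.cong refl) auto
        also have "\<dots> = a D * \<psi> (D-1-q) l + (\<Sum>t<D. a t * (if q < t then \<psi> (t-1-q) l else 0))"
          using qD by simp
        also have "(\<Sum>t<D. a t * (if q < t then \<psi> (t-1-q) l else 0)) = 0"
        proof (intro sum.neutral ballI)
          fix t assume "t \<in> {..<D}"
          then have "q < t \<Longrightarrow> t - 1 - q < r" using rq by auto
          then show "a t * (if q < t then \<psi> (t-1-q) l else 0) = 0" using less.IH l by auto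
        qed
        finally show ?thesis using w1 aD rq by simp
      next
        case False
        define v where "v = (A ^\<^sub>m (r - D) * B) *\<^sub>v unit_vec m l"
        have v: "v \<in> carrier_vec n" unfolding v_def using A B
          by (metis mult_carrier_mat mult_mat_vec_carrier pow_carrier_mat unit_vec_carrier)
        have "0 = (\<Sum>t\<le>D. a t * (\<xi> \<bullet> (A ^\<^sub>m t *\<^sub>v v)))" using kry v by simp
        also have "\<dots> = (\<Sum>t\<le>D. a t * \<psi> (t + (r - D)) l)"
          unfolding v_def \<psi>_def using psi_unit[OF xi l] by simp
        also have "\<dots> = (\<Sum>t\<in>insert D {..<D}. a t * \<psi> (t + (r - D)) l)"
          by (intro sum.cong refl) auto
        also have "\<dots> = a D * \<psi> (D + (r - D)) l + (\<Sum>t<D. a t * \<psi> (t + (r - D)) l)" by simp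
        also have "(\<Sum>t<D. a t * \<psi> (t + (r - D)) l) = 0"
        proof (intro sum.neutral ballI)
          fix t assume "t \<in> {..<D}"
          then have "t + (r - D) < r" using False by auto
          then show "a t * \<psi> (t + (r - D)) l = 0" using less.IH l by auto
        qed
        finally show ?thesis using aD False by simp
      qed
    qed
  qed
  have xi0: "\<xi> = 0\<^sub>v n"
  proof (rule rank_left_kernel[of "ctrb_matrix n m A B" n "n*m"])
    show "ctrb_matrix n m A B \<in> carrier_mat n (n*m)" unfolding ctrb_matrix_def by simp
    show "vec_space.rank n (ctrb_matrix n m A B) = n" using ctrb unfolding controllable_def .
    show "\<xi> \<in> carrier_vec n" by (rule xi)
    show "\<forall>j<n*m. col (ctrb_matrix n m A B) j \<bullet> \<xi> = 0"
    proof (intro allI impI)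
      fix j assume j: "j < n*m"
      have P: "A ^\<^sub>m (j div m) * B \<in> carrier_mat n m" using A B by (metis mult_carrier_mat pow_carrier_mat)
      have jm: "j mod m < m" using m by simp
      have "col (ctrb_matrix n m A B) j \<bullet> \<xi> = col (A ^\<^sub>m (j div m) * B) (j mod m) \<bullet> \<xi>"
        using col_ctrb[OF A B j m] by simp
      also have "\<dots> = \<psi> (j div m) (j mod m)"
      proof -
        have dc: "dim_col (A ^\<^sub>m (j div m) * B) = m" using P by blast
        have "((A ^\<^sub>m (j div m) * B)\<^sup>T *\<^sub>v \<xi>) $ (j mod m) = row ((A ^\<^sub>m (j div m) * B)\<^sup>T) (j mod m) \<bullet> \<xi>"
          using jm dc by (simp only: index_mult_mat_vec index_transpose_mat)
        also have "row ((A ^\<^sub>m (j div m) * B)\<^sup>T) (j mod m) = col (A ^\<^sub>m (j div m) * B) (j mod m)"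
          using jm dc by simp
        finally show ?thesis unfolding \<psi>_def by simp
      qed
      also have "\<dots> = 0" using E2 jm by simp
      finally show "col (ctrb_matrix n m A B) j \<bullet> \<xi> = 0" .
    qed
  qed
  have "\<beta> = 0"
  proof -
    have "0 + k \<le> L" using LL by simp
    then have r0: "\<xi> \<bullet> xd 0 + (\<Sum>i<k. \<Sum>l<m. \<eta> i l * ud (0+i) $ l) + \<beta> = 0" using rel by blast
    have "xd 0 \<in> carrier_vec n" using xdc LL by simp
    then have "\<xi> \<bullet> xd 0 = 0" using xi0 by simp
    moreover have "(\<Sum>i<k. \<Sum>l<m. \<eta> i l * ud (0+i) $ l) = 0" using E1 by simp
    ultimately show ?thesis using r0 by simp
  qed
  then show ?thesis using xi0 E1 by simp
qed

end


lemma sum_rows3: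
  fixes n k m :: nat
  shows "(\<Sum>r<1+n+k*m. f r) = f 0 + (\<Sum>c<n. f (1+c)) + (\<Sum>i<k. \<Sum>l<m. f (1+n+(i*m+l)))"
proof -
  have "(\<Sum>r<1+n+k*m. f r) = (\<Sum>r<1+n. f r) + (\<Sum>l<k*m. f (1+n+l))"
    using sum_split_add[where a="1+n" and b="k*m" and f=f] by simp
  also have "(\<Sum>r<1+n. f r) = (\<Sum>r<1. f r) + (\<Sum>c<n. f (1+c))"
    using sum_split_add[where a=1 and b=n and f=f] by simp
  also have "(\<Sum>l<k*m. f (1+n+l)) = (\<Sum>i<k. \<Sum>l<m. f (1+n+(i*m+l)))" by (rule sum_divmod)
  finally show ?thesis by simp
qed

lemma idx_lt: "i < k \<Longrightarrow> l < (m::nat) \<Longrightarrow> i*m+l < k*m"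
proof -
  assume "i < k" "l < m"
  then have "i*m + l < i*m + m" by simp
  also have "\<dots> = Suc i * m" by simp
  also have "\<dots> \<le> k * m" using \<open>i < k\<close> by (intro mult_le_mono1) simp
  finally show ?thesis .
qed

context lsys
begin

lemma FL_surj:
  fixes k :: nat and x0 :: "real vec" and uu :: "nat \<Rightarrow> real vec"
  assumes m: "m > 0" and k: "k > 0"
    and ctrb: "controllable n m A B"
    and PE: "persistently_exciting m (n + k + 1) L ud"
    and x0: "x0 \<in> carrier_vec n" and uu: "\<forall>i<k. uu i \<in> carrier_vec m"
  shows "\<exists>\<alpha> \<in> carrier_vec (L-k+1). (\<Sum>j<L-k+1. \<alpha> $ j) = 1
     \<and> (\<forall>c<n. (\<Sum>j<L-k+1. \<alpha> $ j * xd j $ c) = x0 $ c)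
     \<and> (\<forall>i<k. \<forall>l<m. (\<Sum>j<L-k+1. \<alpha> $ j * ud (j+i) $ l) = uu i $ l)"
proof -
  define N where "N = L - k + 1"
  define R where "R = 1 + n + k*m"
  have LL: "n + k + 1 \<le> L" using PE_len[OF m PE] k by simp
  define M where "M = mat R N (\<lambda>(r,j). if r = 0 then 1 else if r \<le> n then xd j $ (r-1)
      else ud (j + (r-1-n) div m) $ ((r-1-n) mod m))"
  define b where "b = vec R (\<lambda>r. if r = 0 then 1 else if r \<le> n then x0 $ (r-1)
      else uu ((r-1-n) div m) $ ((r-1-n) mod m))"
  have M: "M \<in> carrier_mat R N" unfolding M_def by simp
  have b: "b \<in> carrier_vec R" unfolding b_def by simp
  have rowsum: "(\<Sum>r<R. M $$ (r,j) * z $ r) = z $ 0 + (\<Sum>c<n. xd j $ c * z $ (1+c))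
      + (\<Sum>i<k. \<Sum>l<m. ud (j+i) $ l * z $ (1+n+(i*m+l)))" if j: "j < N" for j z
  proof -
    have "(\<Sum>r<R. M $$ (r,j) * z $ r) = M $$ (0,j) * z $ 0 + (\<Sum>c<n. M $$ (1+c,j) * z $ (1+c))
      + (\<Sum>i<k. \<Sum>l<m. M $$ (1+n+(i*m+l),j) * z $ (1+n+(i*m+l)))"
      unfolding R_def by (rule sum_rows3)
    also have "M $$ (0,j) = 1" unfolding M_def R_def using j by simp
    also have "(\<Sum>c<n. M $$ (1+c,j) * z $ (1+c)) = (\<Sum>c<n. xd j $ c * z $ (1+c))"
      by (intro sum.cong refl) (use j in \<open>auto simp: M_def R_def\<close>)
    also have "(\<Sum>i<k. \<Sum>l<m. M $$ (1+n+(i*m+l),j) * z $ (1+n+(i*m+l)))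
        = (\<Sum>i<k. \<Sum>l<m. ud (j+i) $ l * z $ (1+n+(i*m+l)))"
    proof (intro sum.cong refl)
      fix i l assume i: "i \<in> {..<k}" and l: "l \<in> {..<m}"
      have "i*m+l < k*m" using i l idx_lt by simp
      then show "M $$ (1+n+(i*m+l),j) * z $ (1+n+(i*m+l)) = ud (j+i) $ l * z $ (1+n+(i*m+l))"
        using j l unfolding M_def R_def by simp
    qed
    finally show ?thesis by simp
  qed
  have lk: "\<forall>z\<in>carrier_vec R. M\<^sup>T *\<^sub>v z = 0\<^sub>v N \<longrightarrow> z = 0\<^sub>v R"
  proof (intro ballI impI)
    fix z :: "real vec" assume z: "z \<in> carrier_vec R" and Mz: "M\<^sup>T *\<^sub>v z = 0\<^sub>v N"
    define \<xi> where "\<xi> = vec n (\<lambda>c. z $ (1+c))"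
    define \<eta> where "\<eta> i l = z $ (1+n+(i*m+l))" for i l
    have xi: "\<xi> \<in> carrier_vec n" unfolding \<xi>_def by simp
    have rel: "\<forall>j. j + k \<le> L \<longrightarrow> \<xi> \<bullet> xd j + (\<Sum>i<k. \<Sum>l<m. \<eta> i l * ud (j+i) $ l) + z $ 0 = 0"
    proof (intro allI impI)
      fix j assume jk: "j + k \<le> L"
      then have j: "j < N" unfolding N_def by simp
      have xj: "xd j \<in> carrier_vec n" using xdc jk k by simp
      have "0 = (M\<^sup>T *\<^sub>v z) $ j" using Mz j by simp
      also have "\<dots> = col M j \<bullet> z" using M j by simp
      also have "\<dots> = (\<Sum>r<R. M $$ (r,j) * z $ r)"
        unfolding scalar_prod_def using z M j by (intro sum.cong) auto
      also have "\<dots> = z $ 0 + (\<Sum>c<n. xd j $ c * z $ (1+c))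
          + (\<Sum>i<k. \<Sum>l<m. ud (j+i) $ l * z $ (1+n+(i*m+l)))" by (rule rowsum[OF j])
      also have "(\<Sum>c<n. xd j $ c * z $ (1+c)) = \<xi> \<bullet> xd j"
        unfolding scalar_prod_def \<xi>_def using xj by (intro sum.cong) auto
      also have "(\<Sum>i<k. \<Sum>l<m. ud (j+i) $ l * z $ (1+n+(i*m+l))) = (\<Sum>i<k. \<Sum>l<m. \<eta> i l * ud (j+i) $ l)"
        unfolding \<eta>_def by (simp add: mult.commute)
      finally show "\<xi> \<bullet> xd j + (\<Sum>i<k. \<Sum>l<m. \<eta> i l * ud (j+i) $ l) + z $ 0 = 0" by simp
    qed
    have res: "\<xi> = 0\<^sub>v n \<and> (\<forall>i<k. \<forall>l<m. \<eta> i l = 0) \<and> z $ 0 = 0"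
      by (rule FL_core[OF m k ctrb PE xi rel])
    show "z = 0\<^sub>v R"
    proof (rule eq_vecI)
      show "dim_vec z = dim_vec (0\<^sub>v R)" using z by simp
      fix r assume "r < dim_vec (0\<^sub>v R)"
      then have r: "r < R" by simp
      show "z $ r = 0\<^sub>v R $ r"
      proof (cases "r = 0")
        case True then show ?thesis using res r by simp
      next
        case False
        show ?thesis
        proof (cases "r \<le> n")
          case True
          obtain r' where rr': "r = Suc r'" using False by (cases r) auto
          have "\<xi> $ r' = z $ r" unfolding \<xi>_def using True rr' by simp
          then show ?thesis using res True rr' r by simp
        next
          case nle: False
          define i where "i = (r-1-n) div m"
          define l where "l = (r-1-n) mod m"
          have rr: "r = 1+n+(i*m+l)" unfolding i_def l_def using nle by simp
          have l: "l < m" unfolding l_def using m by simp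
          have "r - 1 - n < k*m" using r nle unfolding R_def by simp
          then have i: "i < k" unfolding i_def using m
            by (simp add: less_mult_imp_div_less)
          have "\<eta> i l = z $ r" unfolding \<eta>_def using rr by simp
          then show ?thesis using res i l r by simp
        qed
      qed
    qed
  qed
  obtain y where y: "y \<in> carrier_vec N" "M *\<^sub>v y = b"
    using left_kernel_surj[OF M lk b] by blast
  have ent: "(M *\<^sub>v y) $ r = (\<Sum>j<N. M $$ (r,j) * y $ j)" if "r < R" for r
    unfolding mult_mat_vec_def scalar_prod_def using that y(1) M
    by (simp add: atLeast0LessThan row_def)
  have s1: "(\<Sum>j<N. y $ j) = 1"
  proof -
    have "(\<Sum>j<N. y $ j) = (M *\<^sub>v y) $ 0" using ent[of 0] unfolding R_def M_def by simp
    then show ?thesis using y(2) unfolding b_def R_def by simp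
  qed
  have s2: "(\<Sum>j<N. y $ j * xd j $ c) = x0 $ c" if c: "c < n" for c
  proof -
    have "(M *\<^sub>v y) $ (1+c) = (\<Sum>j<N. M $$ (1+c,j) * y $ j)" using ent[of "1+c"] c unfolding R_def by simp
    also have "\<dots> = (\<Sum>j<N. y $ j * xd j $ c)"
      by (intro sum.cong refl) (use c in \<open>auto simp: M_def R_def\<close>)
    finally show ?thesis using y(2) c unfolding b_def R_def by simp
  qed
  have s3: "(\<Sum>j<N. y $ j * ud (j+i) $ l) = uu i $ l" if i: "i < k" and l: "l < m" for i l
  proof -
    have il: "i*m+l < k*m" using idx_lt i l by simp
    have d: "(i*m+l) div m = i" "(i*m+l) mod m = l" using l by auto
    have "(M *\<^sub>v y) $ (1+n+(i*m+l)) = (\<Sum>j<N. M $$ (1+n+(i*m+l),j) * y $ j)"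
      using ent[of "1+n+(i*m+l)"] il unfolding R_def by simp
    also have "\<dots> = (\<Sum>j<N. y $ j * ud (j+i) $ l)"
      by (intro sum.cong refl) (use il d in \<open>auto simp: M_def R_def\<close>)
    finally show ?thesis using y(2) il d unfolding b_def R_def by simp
  qed
  show ?thesis using y(1) s1 s2 s3 unfolding N_def by blast
qed

lemma lincomb_mat:
  fixes M :: "real mat" and w :: "nat \<Rightarrow> real vec" and \<alpha> :: "real vec"
  assumes M: "M \<in> carrier_mat a b" and w: "\<forall>j<N. w j \<in> carrier_vec b" and r: "r < a"
  shows "(M *\<^sub>v vec b (\<lambda>c. \<Sum>j<N. \<alpha> $ j * w j $ c)) $ r = (\<Sum>j<N. \<alpha> $ j * (M *\<^sub>v w j) $ r)"
proof -
  have "(M *\<^sub>v vec b (\<lambda>c. \<Sum>j<N. \<alpha> $ j * w j $ c)) $ r = (\<Sum>c<b. M $$ (r,c) * (\<Sum>j<N. \<alpha> $ j * w j $ c))"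
    using M r unfolding mult_mat_vec_def scalar_prod_def by (simp add: atLeast0LessThan row_def)
  also have "\<dots> = (\<Sum>c<b. \<Sum>j<N. \<alpha> $ j * (M $$ (r,c) * w j $ c))"
    by (simp add: sum_distrib_left mult.left_commute)
  also have "\<dots> = (\<Sum>j<N. \<Sum>c<b. \<alpha> $ j * (M $$ (r,c) * w j $ c))" by (rule sum.swap)
  also have "\<dots> = (\<Sum>j<N. \<alpha> $ j * (M *\<^sub>v w j) $ r)"
  proof (intro sum.cong refl)
    fix j assume "j \<in> {..<N}"
    then have wj: "w j \<in> carrier_vec b" using w by simp
    have "(M *\<^sub>v w j) $ r = (\<Sum>c<b. M $$ (r,c) * w j $ c)"
      using M r wj unfolding mult_mat_vec_def scalar_prod_def by (simp add: atLeast0LessThan row_def)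
    then show "(\<Sum>c<b. \<alpha> $ j * (M $$ (r,c) * w j $ c)) = \<alpha> $ j * (M *\<^sub>v w j) $ r"
      by (simp add: sum_distrib_left)
  qed
  finally show ?thesis .
qed

lemma dyn_comb:
  fixes \<alpha> :: "real vec" and N t :: nat
  assumes sum1: "(\<Sum>j<N. \<alpha> $ j) = 1" and tN: "t + N < L"
  shows "vec n (\<lambda>c. \<Sum>j<N. \<alpha> $ j * xd (Suc t + j) $ c)
    = A *\<^sub>v vec n (\<lambda>c. \<Sum>j<N. \<alpha> $ j * xd (t + j) $ c) + B *\<^sub>v vec m (\<lambda>l. \<Sum>j<N. \<alpha> $ j * ud (t + j) $ l) + s"
proof (rule eq_vecI)
  fix r assume "r < dim_vec (A *\<^sub>v vec n (\<lambda>c. \<Sum>j<N. \<alpha> $ j * xd (t + j) $ c) + B *\<^sub>v vec m (\<lambda>l. \<Sum>j<N. \<alpha> $ j * ud (t + j) $ l) + s)"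
  then have r: "r < n" using A s by simp
  have w1: "\<forall>j<N. xd (t+j) \<in> carrier_vec n" using xdc tN by simp
  have w2: "\<forall>j<N. ud (t+j) \<in> carrier_vec m" using udc tN by simp
  have "(A *\<^sub>v vec n (\<lambda>c. \<Sum>j<N. \<alpha> $ j * xd (t + j) $ c) + B *\<^sub>v vec m (\<lambda>l. \<Sum>j<N. \<alpha> $ j * ud (t + j) $ l) + s) $ r
      = (\<Sum>j<N. \<alpha> $ j * (A *\<^sub>v xd (t+j)) $ r) + (\<Sum>j<N. \<alpha> $ j * (B *\<^sub>v ud (t+j)) $ r) + (\<Sum>j<N. \<alpha> $ j) * s $ r"
    using lincomb_mat[OF A w1 r] lincomb_mat[OF B w2 r] r A B s sum1 by simp
  also have "\<dots> = (\<Sum>j<N. \<alpha> $ j * ((A *\<^sub>v xd (t+j)) $ r + (B *\<^sub>v ud (t+j)) $ r + s $ r))"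
  proof -
    have sr: "(\<Sum>j<N. \<alpha> $ j) * s $ r = (\<Sum>j<N. \<alpha> $ j * s $ r)" by (simp add: sum_distrib_right)
    show ?thesis by (simp only: distrib_left sum.distrib sr)
  qed
  also have "\<dots> = (\<Sum>j<N. \<alpha> $ j * xd (Suc t + j) $ r)"
  proof (intro sum.cong refl)
    fix j assume "j \<in> {..<N}"
    then have j1: "t + j + 1 < L" using tN by simp
    have "xd (Suc t + j) = A *\<^sub>v xd (t+j) + B *\<^sub>v ud (t+j) + s" using dyn j1 by simp
    then show "\<alpha> $ j * ((A *\<^sub>v xd (t+j)) $ r + (B *\<^sub>v ud (t+j)) $ r + s $ r) = \<alpha> $ j * xd (Suc t + j) $ r"
      using r A B s by simp
  qed
  finally show "vec n (\<lambda>c. \<Sum>j<N. \<alpha> $ j * xd (Suc t + j) $ c) $ r = (A *\<^sub>v vec n (\<lambda>c. \<Sum>j<N. \<alpha> $ j * xd (t + j) $ c) + B *\<^sub>v vec m (\<lambda>l. \<Sum>j<N. \<alpha> $ j * ud (t + j) $ l) + s) $ r"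
    using r by simp
qed (use A s in simp)

end


lemma div_bound: "i < d * (T+1) \<Longrightarrow> i div d \<le> (T::nat)"
  using less_mult_imp_div_less[of i "T+1" d] by (simp add: mult.commute)

lemma H1_eq:
  assumes TL: "T < L"
  shows "mat_of_rows (L - T) (map (row (hankel n (T+1) L xd)) [0..<n]) = mat n (L-T) (\<lambda>(c,j). xd j $ c)"
proof (rule eq_matI)
  fix c j assume c: "c < dim_row (mat n (L-T) (\<lambda>(c,j). xd j $ c))" and j: "j < dim_col (mat n (L-T) (\<lambda>(c,j). xd j $ c))"
  then have c: "c < n" and j: "j < L - T" by auto
  have "mat_of_rows (L - T) (map (row (hankel n (T+1) L xd)) [0..<n]) $$ (c,j)
      = row (hankel n (T+1) L xd) c $ j"
    using c j by (simp add: mat_of_rows_index)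
  also have "\<dots> = xd j $ c" using c j TL unfolding hankel_def by (simp add: row_def)
  finally show "mat_of_rows (L - T) (map (row (hankel n (T+1) L xd)) [0..<n]) $$ (c,j) = mat n (L-T) (\<lambda>(c,j). xd j $ c) $$ (c,j)"
    using c j by simp
qed auto

lemma Gamma_char:
  assumes TL: "T < L"
  shows "G \<in> Gamma_set n T L xd \<longleftrightarrow> G \<in> carrier_mat (L-T) n
     \<and> (\<forall>c<n. \<forall>c'<n. (\<Sum>j<L-T. xd j $ c * G $$ (j,c')) = (if c = c' then 1 else 0))
     \<and> (\<forall>c<n. (\<Sum>j<L-T. G $$ (j,c)) = 1)"
proof -
  let ?H = "mat n (L-T) (\<lambda>(c,j). xd j $ c)"
  have e1: "?H * G = 1\<^sub>m n \<longleftrightarrow> (\<forall>c<n. \<forall>c'<n. (\<Sum>j<L-T. xd j $ c * G $$ (j,c')) = (if c = c' then 1 else 0))"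
    if G: "G \<in> carrier_mat (L-T) n"
  proof -
    have ent: "(?H * G) $$ (c,c') = (\<Sum>j<L-T. xd j $ c * G $$ (j,c'))" if "c < n" "c' < n" for c c'
      using that G by (simp add: scalar_prod_def atLeast0LessThan row_def col_def)
    show ?thesis
    proof
      assume "?H * G = 1\<^sub>m n"
      then show "\<forall>c<n. \<forall>c'<n. (\<Sum>j<L-T. xd j $ c * G $$ (j,c')) = (if c = c' then 1 else 0)"
        using ent by (metis index_one_mat(1))
    next
      assume a: "\<forall>c<n. \<forall>c'<n. (\<Sum>j<L-T. xd j $ c * G $$ (j,c')) = (if c = c' then 1 else 0)"
      show "?H * G = 1\<^sub>m n"
        by (rule eq_matI) (use G a ent in auto)
    qed
  qed
  have e2: "G\<^sup>T *\<^sub>v ones_vec (L - T) = ones_vec n \<longleftrightarrow> (\<forall>c<n. (\<Sum>j<L-T. G $$ (j,c)) = 1)"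
    if G: "G \<in> carrier_mat (L-T) n"
  proof -
    have ent: "(G\<^sup>T *\<^sub>v ones_vec (L - T)) $ c = (\<Sum>j<L-T. G $$ (j,c))" if "c < n" for c
      using that G unfolding ones_vec_def by (simp add: scalar_prod_def atLeast0LessThan col_def)
    show ?thesis
    proof
      assume "G\<^sup>T *\<^sub>v ones_vec (L - T) = ones_vec n"
      then show "\<forall>c<n. (\<Sum>j<L-T. G $$ (j,c)) = 1" using ent unfolding ones_vec_def by (metis index_vec)
    next
      assume a: "\<forall>c<n. (\<Sum>j<L-T. G $$ (j,c)) = 1"
      show "G\<^sup>T *\<^sub>v ones_vec (L - T) = ones_vec n"
        by (rule eq_vecI) (use G a ent in \<open>auto simp: ones_vec_def\<close>)
    qed
  qed
  show ?thesis unfolding Gamma_set_def H1_eq[OF TL] mem_Collect_eq using e1 e2 by blast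
qed

lemma Lambda_char:
  assumes TL: "T < L"
  shows "g \<in> Lambda_set n T L xd \<longleftrightarrow> g \<in> carrier_vec (L-T)
     \<and> (\<forall>c<n. (\<Sum>j<L-T. xd j $ c * g $ j) = 0) \<and> (\<Sum>j<L-T. g $ j) = 1"
proof -
  let ?H = "mat n (L-T) (\<lambda>(c,j). xd j $ c)"
  have e1: "?H *\<^sub>v g = 0\<^sub>v n \<longleftrightarrow> (\<forall>c<n. (\<Sum>j<L-T. xd j $ c * g $ j) = 0)"
    if g: "g \<in> carrier_vec (L-T)"
  proof -
    have ent: "(?H *\<^sub>v g) $ c = (\<Sum>j<L-T. xd j $ c * g $ j)" if "c < n" for c
      using that g by (simp add: scalar_prod_def atLeast0LessThan row_def)
    show ?thesis
    proof
      assume "?H *\<^sub>v g = 0\<^sub>v n"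
      then show "\<forall>c<n. (\<Sum>j<L-T. xd j $ c * g $ j) = 0" using ent by (metis index_zero_vec(1))
    next
      assume a: "\<forall>c<n. (\<Sum>j<L-T. xd j $ c * g $ j) = 0"
      show "?H *\<^sub>v g = 0\<^sub>v n" by (rule eq_vecI) (use g a ent in auto)
    qed
  qed
  have e2: "ones_vec (L - T) \<bullet> g = (\<Sum>j<L-T. g $ j)" if g: "g \<in> carrier_vec (L-T)"
    using g unfolding scalar_prod_def ones_vec_def by (simp add: atLeast0LessThan)
  show ?thesis unfolding Lambda_set_def H1_eq[OF TL] mem_Collect_eq using e1 e2 by auto
qed

lemma GG_eq:
  assumes G: "G \<in> carrier_mat N n" and g: "g \<in> carrier_vec N" and x0: "x0 \<in> carrier_vec n"
  shows "GG_mat n G g *\<^sub>v (x0 @\<^sub>v ones_vec 1) = vec N (\<lambda>j. (\<Sum>c<n. (G $$ (j,c) - g $ j) * x0 $ c) + g $ j)"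
proof (rule eq_vecI)
  fix j assume "j < dim_vec (vec N (\<lambda>j. (\<Sum>c<n. (G $$ (j,c) - g $ j) * x0 $ c) + g $ j))"
  then have j: "j < N" by simp
  have "(GG_mat n G g *\<^sub>v (x0 @\<^sub>v ones_vec 1)) $ j = (\<Sum>c<Suc n. GG_mat n G g $$ (j,c) * (x0 @\<^sub>v ones_vec 1) $ c)"
    using j G x0 unfolding GG_mat_def ones_vec_def by (simp add: scalar_prod_def atLeast0LessThan row_def del: sum.lessThan_Suc)
  also have "\<dots> = (\<Sum>c<n. (G $$ (j,c) - g $ j) * x0 $ c) + g $ j"
    using j G x0 unfolding GG_mat_def ones_vec_def by simp
  finally show "(GG_mat n G g *\<^sub>v (x0 @\<^sub>v ones_vec 1)) $ j = vec N (\<lambda>j. (\<Sum>c<n. (G $$ (j,c) - g $ j) * x0 $ c) + g $ j) $ j"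
    using j by simp
qed (use G in \<open>simp add: GG_mat_def\<close>)

lemma stack_eq:
  fixes z sig :: "nat \<Rightarrow> real vec" and \<alpha> :: "real vec"
  assumes p: "p > 0" and TL: "T < L" and \<alpha>: "\<alpha> \<in> carrier_vec (L - T)"
    and zc: "\<forall>t\<le>T. z t \<in> carrier_vec p"
  shows "stack p T z = hankel p (T+1) L sig *\<^sub>v \<alpha> \<longleftrightarrow>
     (\<forall>t\<le>T. z t = vec p (\<lambda>c. \<Sum>j<L-T. \<alpha> $ j * sig (t+j) $ c))"
proof -
  have ent: "(hankel p (T+1) L sig *\<^sub>v \<alpha>) $ i = (\<Sum>j<L-T. \<alpha> $ j * sig (i div p + j) $ (i mod p))"
    if i: "i < p * (T+1)" for i
    using i \<alpha> TL unfolding hankel_def by (simp add: scalar_prod_def atLeast0LessThan row_def mult.commute)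
  have dims: "dim_vec (stack p T z) = p * (T+1)" "dim_vec (hankel p (T+1) L sig *\<^sub>v \<alpha>) = p * (T+1)"
    unfolding stack_def hankel_def by simp_all
  show ?thesis
  proof
    assume eq: "stack p T z = hankel p (T+1) L sig *\<^sub>v \<alpha>"
    show "\<forall>t\<le>T. z t = vec p (\<lambda>c. \<Sum>j<L-T. \<alpha> $ j * sig (t+j) $ c)"
    proof (intro allI impI)
      fix t assume t: "t \<le> T"
      show "z t = vec p (\<lambda>c. \<Sum>j<L-T. \<alpha> $ j * sig (t+j) $ c)"
      proof (rule eq_vecI)
        fix c assume "c < dim_vec (vec p (\<lambda>c. \<Sum>j<L-T. \<alpha> $ j * sig (t+j) $ c))"
        then have c: "c < p" by simp
        have i: "t*p + c < p * (T+1)" using idx_lt[of t "T+1" c p] t c by (simp add: mult.commute)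
        have d: "(t*p+c) div p = t" "(t*p+c) mod p = c" using c by auto
        have "z t $ c = stack p T z $ (t*p+c)" unfolding stack_def using i d by simp
        also have "\<dots> = (\<Sum>j<L-T. \<alpha> $ j * sig (t + j) $ c)" using eq ent[OF i] d by simp
        finally show "z t $ c = vec p (\<lambda>c. \<Sum>j<L-T. \<alpha> $ j * sig (t+j) $ c) $ c" using c by simp
      qed (use zc t in simp)
    qed
  next
    assume a: "\<forall>t\<le>T. z t = vec p (\<lambda>c. \<Sum>j<L-T. \<alpha> $ j * sig (t+j) $ c)"
    show "stack p T z = hankel p (T+1) L sig *\<^sub>v \<alpha>"
    proof (rule eq_vecI)
      fix i assume "i < dim_vec (hankel p (T+1) L sig *\<^sub>v \<alpha>)"
      then have i: "i < p * (T+1)" using dims by simp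
      have t: "i div p \<le> T" using div_bound[OF i] .
      have c: "i mod p < p" using p by simp
      have "stack p T z $ i = z (i div p) $ (i mod p)" unfolding stack_def using i by simp
      also have "\<dots> = (\<Sum>j<L-T. \<alpha> $ j * sig (i div p + j) $ (i mod p))" using a t c by simp
      finally show "stack p T z $ i = (hankel p (T+1) L sig *\<^sub>v \<alpha>) $ i" using ent[OF i] by simp
    qed (use dims in simp)
  qed
qed

lemma blockdiag_mult:
  fixes H :: "real mat" and z :: "nat \<Rightarrow> real vec"
  assumes H: "H \<in> carrier_mat d q" and q: "q > 0" and i: "i < d * (T+1)"
    and zc: "\<forall>t\<le>T. z t \<in> carrier_vec q"
  shows "(blockdiag T H *\<^sub>v stack q T z) $ i = (H *\<^sub>v z (i div d)) $ (i mod d)"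
proof -
  have d: "d > 0" using i by (cases d) auto
  have t: "i div d < T + 1" using div_bound[OF i] by simp
  have Hd: "dim_row H = d" "dim_col H = q" using H by auto
  have r: "i mod d < d" using d by simp
  have "(blockdiag T H *\<^sub>v stack q T z) $ i
      = (\<Sum>c<(T+1)*q. (if i div d = c div q then H $$ (i mod d, c mod q) else 0) * z (c div q) $ (c mod q))"
    using i unfolding blockdiag_def stack_def Hd
    by (simp add: scalar_prod_def atLeast0LessThan row_def mult.commute)
  also have "\<dots> = (\<Sum>t<T+1. \<Sum>l<q. (if i div d = t then H $$ (i mod d, l) else 0) * z t $ l)"
    by (subst sum_divmod, intro sum.cong refl) (use q in auto)
  also have "\<dots> = (\<Sum>l<q. H $$ (i mod d, l) * z (i div d) $ l)"
  proof -
    have "(\<Sum>t<T+1. \<Sum>l<q. (if i div d = t then H $$ (i mod d, l) else 0) * z t $ l)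
        = (\<Sum>t<T+1. if t = i div d then (\<Sum>l<q. H $$ (i mod d, l) * z t $ l) else 0)"
      by (intro sum.cong refl) auto
    also have "\<dots> = (\<Sum>l<q. H $$ (i mod d, l) * z (i div d) $ l)"
      using t by (simp add: sum.delta)
    finally show ?thesis .
  qed
  also have "\<dots> = (H *\<^sub>v z (i div d)) $ (i mod d)"
  proof -
    have zt: "z (i div d) \<in> carrier_vec q" using zc t by simp
    then show ?thesis using H r by (simp add: scalar_prod_def atLeast0LessThan row_def)
  qed
  finally show ?thesis .
qed

lemma ineq_equiv:
  fixes Hx Hu :: "real mat" and h :: "real vec" and x u :: "nat \<Rightarrow> real vec"
  assumes Hx: "Hx \<in> carrier_mat d n" and Hu: "Hu \<in> carrier_mat d m" and h: "h \<in> carrier_vec d"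
    and n: "n > 0" and m: "m > 0"
    and xc: "\<forall>t\<le>T. x t \<in> carrier_vec n" and uc: "\<forall>t\<le>T. u t \<in> carrier_vec m"
  shows "vec_le (blockdiag T Hx *\<^sub>v stack n T x + blockdiag T Hu *\<^sub>v stack m T u)
            (vec (dim_vec h * (T + 1)) (\<lambda>i. h $ (i mod dim_vec h)))
     \<longleftrightarrow> (\<forall>t\<le>T. vec_le (Hx *\<^sub>v x t + Hu *\<^sub>v u t) h)"
proof -
  have dh: "dim_vec h = d" using h by simp
  have dimL: "dim_vec (blockdiag T Hx *\<^sub>v stack n T x + blockdiag T Hu *\<^sub>v stack m T u) = d * (T+1)"
    using Hx Hu unfolding blockdiag_def by (simp add: carrier_matD)
  have entL: "(blockdiag T Hx *\<^sub>v stack n T x + blockdiag T Hu *\<^sub>v stack m T u) $ i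
      = (Hx *\<^sub>v x (i div d) + Hu *\<^sub>v u (i div d)) $ (i mod d)" if i: "i < d * (T+1)" for i
  proof -
    have d: "d > 0" using i by (cases d) auto
    have t: "i div d \<le> T" using div_bound[OF i] .
    have r: "i mod d < d" using d by simp
    have dm: "dim_row (blockdiag T Hu) = d * (T+1)" using Hu unfolding blockdiag_def by (simp add: carrier_matD)
    show ?thesis
      using i r blockdiag_mult[OF Hx n i xc] blockdiag_mult[OF Hu m i uc] Hx Hu dm
      unfolding blockdiag_def by simp
  qed
  show ?thesis
  proof
    assume a: "vec_le (blockdiag T Hx *\<^sub>v stack n T x + blockdiag T Hu *\<^sub>v stack m T u)
            (vec (dim_vec h * (T + 1)) (\<lambda>i. h $ (i mod dim_vec h)))"
    show "\<forall>t\<le>T. vec_le (Hx *\<^sub>v x t + Hu *\<^sub>v u t) h"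
    proof (intro allI impI)
      fix t assume t: "t \<le> T"
      have "(Hx *\<^sub>v x t + Hu *\<^sub>v u t) $ r \<le> h $ r" if r: "r < d" for r
      proof -
        have i: "t*d + r < d * (T+1)" using idx_lt[of t "T+1" r d] t r by (simp add: mult.commute)
        have dd: "(t*d+r) div d = t" "(t*d+r) mod d = r" using r by auto
        have all: "\<forall>i<dim_vec (blockdiag T Hx *\<^sub>v stack n T x + blockdiag T Hu *\<^sub>v stack m T u).
            (blockdiag T Hx *\<^sub>v stack n T x + blockdiag T Hu *\<^sub>v stack m T u) $ i
            \<le> vec (dim_vec h * (T + 1)) (\<lambda>i. h $ (i mod dim_vec h)) $ i"
          using a unfolding vec_le_def by blast
        have "(blockdiag T Hx *\<^sub>v stack n T x + blockdiag T Hu *\<^sub>v stack m T u) $ (t*d+r)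
            \<le> vec (dim_vec h * (T + 1)) (\<lambda>i. h $ (i mod dim_vec h)) $ (t*d+r)"
          by (rule all[rule_format]) (subst dimL, rule i)
        then have "(Hx *\<^sub>v x ((t*d+r) div d) + Hu *\<^sub>v u ((t*d+r) div d)) $ ((t*d+r) mod d)
            \<le> vec (dim_vec h * (T + 1)) (\<lambda>i. h $ (i mod dim_vec h)) $ (t*d+r)"
          unfolding entL[OF i] .
        then show ?thesis unfolding dd using i dh r by simp
      qed
      then show "vec_le (Hx *\<^sub>v x t + Hu *\<^sub>v u t) h"
        unfolding vec_le_def using Hx Hu h by simp
    qed
  next
    assume a: "\<forall>t\<le>T. vec_le (Hx *\<^sub>v x t + Hu *\<^sub>v u t) h"
    show "vec_le (blockdiag T Hx *\<^sub>v stack n T x + blockdiag T Hu *\<^sub>v stack m T u)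
            (vec (dim_vec h * (T + 1)) (\<lambda>i. h $ (i mod dim_vec h)))"
      unfolding vec_le_def
    proof (intro conjI allI impI)
      show "dim_vec (blockdiag T Hx *\<^sub>v stack n T x + blockdiag T Hu *\<^sub>v stack m T u)
          = dim_vec (vec (dim_vec h * (T + 1)) (\<lambda>i. h $ (i mod dim_vec h)))" using dimL dh by simp
      fix i assume "i < dim_vec (blockdiag T Hx *\<^sub>v stack n T x + blockdiag T Hu *\<^sub>v stack m T u)"
      then have i: "i < d * (T+1)" using dimL by simp
      have d: "d > 0" using i by (cases d) auto
      have t: "i div d \<le> T" using div_bound[OF i] .
      have r: "i mod d < d" using d by simp
      have "vec_le (Hx *\<^sub>v x (i div d) + Hu *\<^sub>v u (i div d)) h" using a t by blast
      then have all2: "\<forall>r<dim_vec (Hx *\<^sub>v x (i div d) + Hu *\<^sub>v u (i div d)).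
          (Hx *\<^sub>v x (i div d) + Hu *\<^sub>v u (i div d)) $ r \<le> h $ r" unfolding vec_le_def by blast
      have "(Hx *\<^sub>v x (i div d) + Hu *\<^sub>v u (i div d)) $ (i mod d) \<le> h $ (i mod d)"
        by (rule all2[rule_format]) (use r Hu in simp)
      then show "(blockdiag T Hx *\<^sub>v stack n T x + blockdiag T Hu *\<^sub>v stack m T u) $ i
          \<le> vec (dim_vec h * (T + 1)) (\<lambda>i. h $ (i mod dim_vec h)) $ i"
        using entL[OF i] i dh by simp
    qed
  qed
qed



lemma swap_lemma:
  fixes a :: "nat \<Rightarrow> real" and b :: "nat \<Rightarrow> nat \<Rightarrow> real" and x :: "nat \<Rightarrow> real"
  shows "(\<Sum>j<N. a j * (\<Sum>c<n. b j c * x c)) = (\<Sum>c<n. x c * (\<Sum>j<N. a j * b j c))"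
proof -
  have "(\<Sum>j<N. a j * (\<Sum>c<n. b j c * x c)) = (\<Sum>j<N. \<Sum>c<n. a j * b j c * x c)"
    by (simp add: sum_distrib_left mult.assoc)
  also have "\<dots> = (\<Sum>c<n. \<Sum>j<N. a j * b j c * x c)" by (rule sum.swap)
  also have "\<dots> = (\<Sum>c<n. x c * (\<Sum>j<N. a j * b j c))"
    by (simp add: sum_distrib_left mult.commute mult.left_commute)
  finally show ?thesis .
qed

lemma delta_sum:
  fixes x :: "nat \<Rightarrow> real"
  assumes "c < n"
  shows "(\<Sum>c'<n. x c' * (if c = c' then 1 else 0)) = x c"
proof -
  have "(\<Sum>c'<n. x c' * (if c = c' then 1 else 0)) = (\<Sum>c'<n. if c' = c then x c else 0)"
    by (intro sum.cong refl) auto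
  also have "\<dots> = x c" using assms by (simp add: sum.delta)
  finally show ?thesis .
qed

lemma construct_G:
  fixes G0 :: "real mat" and g0 \<alpha> x0 :: "real vec" and xd :: "nat \<Rightarrow> real vec"
  assumes G0: "G0 \<in> carrier_mat N n"
    and G01: "\<forall>c<n. \<forall>c'<n. (\<Sum>j<N. xd j $ c * G0 $$ (j,c')) = (if c = c' then 1 else 0)"
    and G02: "\<forall>c<n. (\<Sum>j<N. G0 $$ (j,c)) = 1"
    and g0: "g0 \<in> carrier_vec N" and g01: "\<forall>c<n. (\<Sum>j<N. xd j $ c * g0 $ j) = 0"
    and g02: "(\<Sum>j<N. g0 $ j) = 1"
    and \<alpha>: "\<alpha> \<in> carrier_vec N" and \<alpha>1: "(\<Sum>j<N. \<alpha> $ j) = 1"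
    and \<alpha>2: "\<forall>c<n. (\<Sum>j<N. \<alpha> $ j * xd j $ c) = x0 $ c"
    and x0: "x0 \<in> carrier_vec n"
  shows "\<exists>G g. G \<in> carrier_mat N n
     \<and> (\<forall>c<n. \<forall>c'<n. (\<Sum>j<N. xd j $ c * G $$ (j,c')) = (if c = c' then 1 else 0))
     \<and> (\<forall>c<n. (\<Sum>j<N. G $$ (j,c)) = 1)
     \<and> g \<in> carrier_vec N \<and> (\<forall>c<n. (\<Sum>j<N. xd j $ c * g $ j) = 0) \<and> (\<Sum>j<N. g $ j) = 1
     \<and> vec N (\<lambda>j. (\<Sum>c<n. (G $$ (j,c) - g $ j) * x0 $ c) + g $ j) = \<alpha>"
proof (cases "x0 = 0\<^sub>v n")
  case True
  have z: "x0 $ c = 0" if "c < n" for c using True that by simp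
  have "vec N (\<lambda>j. (\<Sum>c<n. (G0 $$ (j,c) - \<alpha> $ j) * x0 $ c) + \<alpha> $ j) = \<alpha>"
    using \<alpha> z by (intro eq_vecI) auto
  moreover have "\<forall>c<n. (\<Sum>j<N. xd j $ c * \<alpha> $ j) = 0"
    using \<alpha>2 z by (simp add: mult.commute)
  ultimately show ?thesis using G0 G01 G02 \<alpha> \<alpha>1 by blast
next
  case False
  define \<nu> where "\<nu> = (\<Sum>c<n. x0 $ c * x0 $ c)"
  have "x0 \<bullet> x0 \<noteq> 0" using False self_scalar_zero x0 by blast
  moreover have "x0 \<bullet> x0 = \<nu>" unfolding \<nu>_def scalar_prod_def using x0 by (simp add: atLeast0LessThan)
  ultimately have \<nu>0: "\<nu> \<noteq> 0" by simp
  define \<sigma> where "\<sigma> = (\<Sum>c<n. x0 $ c)"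
  define base where "base j = (\<Sum>c<n. G0 $$ (j,c) * x0 $ c) + (1 - \<sigma>) * g0 $ j" for j
  define \<delta> where "\<delta> j = \<alpha> $ j - base j" for j
  define G where "G = mat N n (\<lambda>(j,c). G0 $$ (j,c) + \<delta> j * x0 $ c / \<nu>)"
  have F1: "(\<Sum>j<N. xd j $ c * \<delta> j) = 0" if c: "c < n" for c
  proof -
    have "(\<Sum>j<N. xd j $ c * base j) = (\<Sum>j<N. xd j $ c * (\<Sum>c'<n. G0 $$ (j,c') * x0 $ c'))
        + (1 - \<sigma>) * (\<Sum>j<N. xd j $ c * g0 $ j)"
      unfolding base_def by (simp add: distrib_left sum.distrib sum_distrib_left mult.left_commute)
    also have "(\<Sum>j<N. xd j $ c * (\<Sum>c'<n. G0 $$ (j,c') * x0 $ c')) = (\<Sum>c'<n. x0 $ c' * (\<Sum>j<N. xd j $ c * G0 $$ (j,c')))"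
      by (rule swap_lemma)
    also have "\<dots> = (\<Sum>c'<n. x0 $ c' * (if c = c' then 1 else 0))"
      using G01 c by (intro sum.cong refl) auto
    also have "\<dots> = x0 $ c" by (rule delta_sum[OF c])
    finally have b: "(\<Sum>j<N. xd j $ c * base j) = x0 $ c" using g01 c by simp
    have a: "(\<Sum>j<N. xd j $ c * \<alpha> $ j) = x0 $ c" using \<alpha>2 c by (simp add: mult.commute)
    show ?thesis unfolding \<delta>_def using a b by (simp add: right_diff_distrib sum_subtractf)
  qed
  have F2: "(\<Sum>j<N. \<delta> j) = 0"
  proof -
    have "(\<Sum>j<N. base j) = (\<Sum>j<N. \<Sum>c<n. G0 $$ (j,c) * x0 $ c) + (1 - \<sigma>) * (\<Sum>j<N. g0 $ j)"
      unfolding base_def by (simp add: sum.distrib sum_distrib_left)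
    also have "(\<Sum>j<N. \<Sum>c<n. G0 $$ (j,c) * x0 $ c) = (\<Sum>c<n. \<Sum>j<N. G0 $$ (j,c) * x0 $ c)" by (rule sum.swap)
    also have "\<dots> = (\<Sum>c<n. x0 $ c)" using G02 by (simp add: sum_distrib_right[symmetric])
    finally have "(\<Sum>j<N. base j) = 1" unfolding \<sigma>_def using g02 by simp
    then show ?thesis unfolding \<delta>_def using \<alpha>1 by (simp add: sum_subtractf)
  qed
  have G: "G \<in> carrier_mat N n" unfolding G_def by simp
  have G1: "\<forall>c<n. \<forall>c'<n. (\<Sum>j<N. xd j $ c * G $$ (j,c')) = (if c = c' then 1 else 0)"
  proof (intro allI impI)
    fix c c' assume c: "c < n" and c': "c' < n"
    have "(\<Sum>j<N. xd j $ c * G $$ (j,c')) = (\<Sum>j<N. xd j $ c * G0 $$ (j,c') + (xd j $ c * \<delta> j) * (x0 $ c' / \<nu>))"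
      unfolding G_def using c' by (intro sum.cong refl) (auto simp: algebra_simps)
    also have "\<dots> = (\<Sum>j<N. xd j $ c * G0 $$ (j,c')) + (\<Sum>j<N. xd j $ c * \<delta> j) * (x0 $ c' / \<nu>)"
      by (simp only: sum.distrib sum_distrib_right)
    finally show "(\<Sum>j<N. xd j $ c * G $$ (j,c')) = (if c = c' then 1 else 0)"
      using G01 F1 c c' by simp
  qed
  have G2: "\<forall>c<n. (\<Sum>j<N. G $$ (j,c)) = 1"
  proof (intro allI impI)
    fix c assume c: "c < n"
    have "(\<Sum>j<N. G $$ (j,c)) = (\<Sum>j<N. G0 $$ (j,c) + \<delta> j * (x0 $ c / \<nu>))"
      unfolding G_def using c by (intro sum.cong refl) auto
    also have "\<dots> = (\<Sum>j<N. G0 $$ (j,c)) + (\<Sum>j<N. \<delta> j) * (x0 $ c / \<nu>)"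
      by (simp only: sum.distrib sum_distrib_right)
    finally show "(\<Sum>j<N. G $$ (j,c)) = 1" using G02 F2 c by simp
  qed
  have GG: "vec N (\<lambda>j. (\<Sum>c<n. (G $$ (j,c) - g0 $ j) * x0 $ c) + g0 $ j) = \<alpha>"
  proof (rule eq_vecI)
    fix j assume "j < dim_vec \<alpha>"
    then have j: "j < N" using \<alpha> by simp
    have "(\<Sum>c<n. (G $$ (j,c) - g0 $ j) * x0 $ c)
        = (\<Sum>c<n. G0 $$ (j,c) * x0 $ c + (\<delta> j / \<nu>) * (x0 $ c * x0 $ c) - g0 $ j * x0 $ c)"
      unfolding G_def using j by (intro sum.cong refl) (auto simp: algebra_simps)
    also have "\<dots> = (\<Sum>c<n. G0 $$ (j,c) * x0 $ c) + (\<delta> j / \<nu>) * \<nu> - g0 $ j * \<sigma>"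
      unfolding \<nu>_def \<sigma>_def by (simp add: sum.distrib sum_subtractf sum_distrib_left)
    also have "\<dots> = (\<Sum>c<n. G0 $$ (j,c) * x0 $ c) + \<delta> j - g0 $ j * \<sigma>" using \<nu>0 by simp
    finally have "(\<Sum>c<n. (G $$ (j,c) - g0 $ j) * x0 $ c) + g0 $ j = base j + \<delta> j"
      unfolding base_def by (simp add: algebra_simps)
    also have "\<dots> = \<alpha> $ j" unfolding \<delta>_def by simp
    finally show "vec N (\<lambda>j. (\<Sum>c<n. (G $$ (j,c) - g0 $ j) * x0 $ c) + g0 $ j) $ j = \<alpha> $ j"
      using j by simp
  qed (use \<alpha> in simp)
  show ?thesis using G G1 G2 g0 g01 g02 GG by blast
qed



theorem mainTheorem4:
  fixes n m d T L :: nat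
    and A B :: "real mat" and s :: "real vec"
    and xd ud :: "nat \<Rightarrow> real vec"
    and p :: pkind and P Q R :: "real mat"
    and Hx Hu :: "real mat" and h :: "real vec"
    and C :: "real mat" and c :: "real vec" and XT :: "real vec set"
    and xinit :: "real vec"
    and xs us :: "nat \<Rightarrow> real vec"
  assumes "n > 0" and "m > 0"
    and "A \<in> carrier_mat n n" and "B \<in> carrier_mat n m" and "s \<in> carrier_vec n"
    and "controllable n m A B"
    and "\<forall>t<L. xd t \<in> carrier_vec n \<and> ud t \<in> carrier_vec m"
    and "\<forall>t. t + 1 < L \<longrightarrow> xd (t + 1) = A *\<^sub>v xd t + B *\<^sub>v ud t + s"
    and "persistently_exciting m (n + (T + 1) + 1) L ud"
    and "cost_ok p n m P Q R"
    and "Hx \<in> carrier_mat d n" and "Hu \<in> carrier_mat d m" and "h \<in> carrier_vec d"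
    and "C \<in> carrier_mat (dim_row C) n" and "c \<in> carrier_vec (dim_row C)"
    and "XT = {z \<in> carrier_vec n. vec_le (C *\<^sub>v z) c}"
    and "xinit \<in> carrier_vec n"
  shows "is_optimal (feasible_P3 n m T L xd ud Hx Hu h xinit XT) (cost p P Q R T) xs us
     \<longleftrightarrow> is_optimal (feasible_MPC n m T A B s Hx Hu h xinit XT) (cost p P Q R T) xs us"
proof -
  interpret lsys n m A B s xd ud L
    by unfold_locales (use assms(3,4,5,7,8) in auto)
  have n: "n > 0" and m: "m > 0" using assms(1,2) by auto
  have ctrb: "controllable n m A B" using assms(6) .
  have PE: "persistently_exciting m (n + (T+1) + 1) L ud" using assms(9) .
  have LL: "n + (T + 1) + 1 \<le> L" using PE_len[OF m PE] by simp
  have TL: "T < L" using LL by simp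
  have NN: "L - (T+1) + 1 = L - T" using TL by simp
  have Hx: "Hx \<in> carrier_mat d n" and Hu: "Hu \<in> carrier_mat d m" and h: "h \<in> carrier_vec d"
    using assms(11,12,13) by auto
  have feq: "feasible_P3 n m T L xd ud Hx Hu h xinit XT x u = feasible_MPC n m T A B s Hx Hu h xinit XT x u"
    for x u
  proof
    assume F: "feasible_P3 n m T L xd ud Hx Hu h xinit XT x u"
    have xc: "\<forall>t\<le>T. x t \<in> carrier_vec n" and uc: "\<forall>t\<le>T. u t \<in> carrier_vec m"
      using F unfolding feasible_P3_def by auto
    have ex: "\<exists>G g. G \<in> Gamma_set n T L xd \<and> g \<in> Lambda_set n T L xd \<and>
        stack n T x = hankel n (T + 1) L xd *\<^sub>v (GG_mat n G g *\<^sub>v (x 0 @\<^sub>v ones_vec 1)) \<and>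
        stack m T u = hankel m (T + 1) L ud *\<^sub>v (GG_mat n G g *\<^sub>v (x 0 @\<^sub>v ones_vec 1))"
      using F unfolding feasible_P3_def by blast
    have ineq: "vec_le (blockdiag T Hx *\<^sub>v stack n T x + blockdiag T Hu *\<^sub>v stack m T u)
            (vec (dim_vec h * (T + 1)) (\<lambda>i. h $ (i mod dim_vec h)))"
      using F unfolding feasible_P3_def by blast
    have x0: "x 0 = xinit" and xT: "x T \<in> XT" using F unfolding feasible_P3_def by blast+
    obtain G g where G: "G \<in> Gamma_set n T L xd" and g: "g \<in> Lambda_set n T L xd"
      and sx: "stack n T x = hankel n (T + 1) L xd *\<^sub>v (GG_mat n G g *\<^sub>v (x 0 @\<^sub>v ones_vec 1))"
      and su: "stack m T u = hankel m (T + 1) L ud *\<^sub>v (GG_mat n G g *\<^sub>v (x 0 @\<^sub>v ones_vec 1))"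
      using ex by blast
    have Gc: "G \<in> carrier_mat (L-T) n" and G2: "\<forall>c<n. (\<Sum>j<L-T. G $$ (j,c)) = 1"
      using G unfolding Gamma_char[OF TL] by auto
    have gc: "g \<in> carrier_vec (L-T)" and g2: "(\<Sum>j<L-T. g $ j) = 1"
      using g unfolding Lambda_char[OF TL] by auto
    have x0c: "x 0 \<in> carrier_vec n" using xc by simp
    define \<alpha> where "\<alpha> = GG_mat n G g *\<^sub>v (x 0 @\<^sub>v ones_vec 1)"
    have \<alpha>e: "\<alpha> = vec (L-T) (\<lambda>j. (\<Sum>c<n. (G $$ (j,c) - g $ j) * x 0 $ c) + g $ j)"
      unfolding \<alpha>_def by (rule GG_eq[OF Gc gc x0c])
    have \<alpha>c: "\<alpha> \<in> carrier_vec (L-T)" unfolding \<alpha>e by simp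
    have \<alpha>1: "(\<Sum>j<L-T. \<alpha> $ j) = 1"
    proof -
      have "(\<Sum>j<L-T. \<alpha> $ j) = (\<Sum>j<L-T. \<Sum>c<n. (G $$ (j,c) - g $ j) * x 0 $ c) + (\<Sum>j<L-T. g $ j)"
        unfolding \<alpha>e by (simp add: sum.distrib)
      also have "(\<Sum>j<L-T. \<Sum>c<n. (G $$ (j,c) - g $ j) * x 0 $ c) = (\<Sum>c<n. \<Sum>j<L-T. (G $$ (j,c) - g $ j) * x 0 $ c)"
        by (rule sum.swap)
      also have "\<dots> = (\<Sum>c<n. ((\<Sum>j<L-T. G $$ (j,c)) - (\<Sum>j<L-T. g $ j)) * x 0 $ c)"
        by (intro sum.cong refl) (simp add: sum_subtractf[symmetric] sum_distrib_right)
      also have "\<dots> = 0" using G2 g2 by simp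
      finally show ?thesis using g2 by simp
    qed
    have xs: "\<forall>t\<le>T. x t = vec n (\<lambda>c. \<Sum>j<L-T. \<alpha> $ j * xd (t+j) $ c)"
      using stack_eq[OF n TL \<alpha>c xc] sx unfolding \<alpha>_def by blast
    have us: "\<forall>t\<le>T. u t = vec m (\<lambda>l. \<Sum>j<L-T. \<alpha> $ j * ud (t+j) $ l)"
      using stack_eq[OF m TL \<alpha>c uc] su unfolding \<alpha>_def by blast
    have dynx: "\<forall>t<T. x (Suc t) = A *\<^sub>v x t + B *\<^sub>v u t + s"
    proof (intro allI impI)
      fix t assume t: "t < T"
      have "x (t+1) = vec n (\<lambda>c. \<Sum>j<L-T. \<alpha> $ j * xd (Suc t + j) $ c)" using xs t by simp
      also have "\<dots> = A *\<^sub>v vec n (\<lambda>c. \<Sum>j<L-T. \<alpha> $ j * xd (t + j) $ c)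
          + B *\<^sub>v vec m (\<lambda>l. \<Sum>j<L-T. \<alpha> $ j * ud (t + j) $ l) + s"
        by (rule dyn_comb[OF \<alpha>1]) (use t TL in simp)
      also have "\<dots> = A *\<^sub>v x t + B *\<^sub>v u t + s" using xs us t by simp
      finally show "x (Suc t) = A *\<^sub>v x t + B *\<^sub>v u t + s" by simp
    qed
    have "\<forall>t\<le>T. vec_le (Hx *\<^sub>v x t + Hu *\<^sub>v u t) h"
      using ineq_equiv[OF Hx Hu h n m xc uc] ineq by blast
    then show "feasible_MPC n m T A B s Hx Hu h xinit XT x u"
      unfolding feasible_MPC_def using xc uc dynx x0 xT by simp
  next
    assume F: "feasible_MPC n m T A B s Hx Hu h xinit XT x u"
    have xc: "\<forall>t\<le>T. x t \<in> carrier_vec n" and uc: "\<forall>t\<le>T. u t \<in> carrier_vec m"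
      using F unfolding feasible_MPC_def by auto
    have dynx: "\<forall>t<T. x (Suc t) = A *\<^sub>v x t + B *\<^sub>v u t + s"
      using F unfolding feasible_MPC_def by simp
    have ineq: "\<forall>t\<le>T. vec_le (Hx *\<^sub>v x t + Hu *\<^sub>v u t) h"
      and x0: "x 0 = xinit" and xT: "x T \<in> XT" using F unfolding feasible_MPC_def by blast+
    have x0c: "x 0 \<in> carrier_vec n" using xc by simp
    have uc': "\<forall>i<T+1. u i \<in> carrier_vec m" using uc by auto
    obtain \<alpha> where \<alpha>c: "\<alpha> \<in> carrier_vec (L-T)" and \<alpha>1: "(\<Sum>j<L-T. \<alpha> $ j) = 1"
      and \<alpha>x: "\<forall>c<n. (\<Sum>j<L-T. \<alpha> $ j * xd j $ c) = x 0 $ c"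
      and \<alpha>u: "\<forall>i<T+1. \<forall>l<m. (\<Sum>j<L-T. \<alpha> $ j * ud (j+i) $ l) = u i $ l"
      using FL_surj[OF m _ ctrb PE x0c uc'] unfolding NN by auto
    have us: "\<forall>t\<le>T. u t = vec m (\<lambda>l. \<Sum>j<L-T. \<alpha> $ j * ud (t+j) $ l)"
    proof (intro allI impI)
      fix t assume t: "t \<le> T"
      show "u t = vec m (\<lambda>l. \<Sum>j<L-T. \<alpha> $ j * ud (t+j) $ l)"
      proof (rule eq_vecI)
        fix l assume "l < dim_vec (vec m (\<lambda>l. \<Sum>j<L-T. \<alpha> $ j * ud (t+j) $ l))"
        then have l: "l < m" by simp
        show "u t $ l = vec m (\<lambda>l. \<Sum>j<L-T. \<alpha> $ j * ud (t+j) $ l) $ l"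
        proof -
          have e: "(\<Sum>j<L-T. \<alpha> $ j * ud (j+t) $ l) = u t $ l" using \<alpha>u t l by simp
          have e2: "(\<Sum>j<L-T. \<alpha> $ j * ud (t+j) $ l) = (\<Sum>j<L-T. \<alpha> $ j * ud (j+t) $ l)"
            by (simp add: add.commute)
          show ?thesis using e e2 l by simp
        qed
      qed (use uc t in simp)
    qed
    have xs: "\<forall>t\<le>T. x t = vec n (\<lambda>c. \<Sum>j<L-T. \<alpha> $ j * xd (t+j) $ c)"
    proof (intro allI impI)
      fix t assume "t \<le> T"
      then show "x t = vec n (\<lambda>c. \<Sum>j<L-T. \<alpha> $ j * xd (t+j) $ c)"
      proof (induction t)
        case 0
        show ?case
        proof (rule eq_vecI)
          fix c assume "c < dim_vec (vec n (\<lambda>c. \<Sum>j<L-T. \<alpha> $ j * xd (0+j) $ c))"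
          then have c: "c < n" by simp
          show "x 0 $ c = vec n (\<lambda>c. \<Sum>j<L-T. \<alpha> $ j * xd (0+j) $ c) $ c"
            using \<alpha>x c by simp
        qed (use x0c in simp)
      next
        case (Suc t)
        then have t: "t < T" by simp
        have "x (Suc t) = A *\<^sub>v x t + B *\<^sub>v u t + s" using dynx t by simp
        also have "\<dots> = A *\<^sub>v vec n (\<lambda>c. \<Sum>j<L-T. \<alpha> $ j * xd (t + j) $ c)
          + B *\<^sub>v vec m (\<lambda>l. \<Sum>j<L-T. \<alpha> $ j * ud (t + j) $ l) + s"
          using Suc.IH t us by simp
        also have "\<dots> = vec n (\<lambda>c. \<Sum>j<L-T. \<alpha> $ j * xd (Suc t + j) $ c)"
          by (rule dyn_comb[OF \<alpha>1, symmetric]) (use t TL in simp)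
        finally show ?case .
      qed
    qed
    have sx: "stack n T x = hankel n (T + 1) L xd *\<^sub>v \<alpha>"
      using stack_eq[OF n TL \<alpha>c xc] xs by blast
    have su: "stack m T u = hankel m (T + 1) L ud *\<^sub>v \<alpha>"
      using stack_eq[OF m TL \<alpha>c uc] us by blast
    have ex1: "\<forall>c. \<exists>\<beta>. c < n \<longrightarrow> (\<beta> \<in> carrier_vec (L-T) \<and> (\<Sum>j<L-T. \<beta> $ j) = 1
        \<and> (\<forall>c'<n. (\<Sum>j<L-T. \<beta> $ j * xd j $ c') = unit_vec n c $ c'))"
    proof
      fix c
      show "\<exists>\<beta>. c < n \<longrightarrow> (\<beta> \<in> carrier_vec (L-T) \<and> (\<Sum>j<L-T. \<beta> $ j) = 1
        \<and> (\<forall>c'<n. (\<Sum>j<L-T. \<beta> $ j * xd j $ c') = unit_vec n c $ c'))"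
        using FL_surj[OF m _ ctrb PE unit_vec_carrier[of n c], of "\<lambda>_. 0\<^sub>v m"] unfolding NN by auto
    qed
    obtain bet where bet: "\<forall>c. c < n \<longrightarrow> (bet c \<in> carrier_vec (L-T) \<and> (\<Sum>j<L-T. bet c $ j) = 1
        \<and> (\<forall>c'<n. (\<Sum>j<L-T. bet c $ j * xd j $ c') = unit_vec n c $ c'))"
      using choice[OF ex1] by blast
    define G0 where "G0 = mat (L-T) n (\<lambda>(j,c). bet c $ j)"
    have G0c: "G0 \<in> carrier_mat (L-T) n" unfolding G0_def by simp
    have G01: "\<forall>c<n. \<forall>c'<n. (\<Sum>j<L-T. xd j $ c * G0 $$ (j,c')) = (if c = c' then 1 else 0)"
    proof (intro allI impI)
      fix c c' assume c: "c < n" and c': "c' < n"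
      have "(\<Sum>j<L-T. xd j $ c * G0 $$ (j,c')) = (\<Sum>j<L-T. bet c' $ j * xd j $ c)"
        unfolding G0_def using c' by (intro sum.cong refl) (auto simp: mult.commute)
      also have "\<dots> = unit_vec n c' $ c" using bet c c' by blast
      finally show "(\<Sum>j<L-T. xd j $ c * G0 $$ (j,c')) = (if c = c' then 1 else 0)"
        using c c' by auto
    qed
    have G02: "\<forall>c<n. (\<Sum>j<L-T. G0 $$ (j,c)) = 1"
    proof (intro allI impI)
      fix c assume c: "c < n"
      have "(\<Sum>j<L-T. G0 $$ (j,c)) = (\<Sum>j<L-T. bet c $ j)"
        unfolding G0_def using c by (intro sum.cong refl) auto
      then show "(\<Sum>j<L-T. G0 $$ (j,c)) = 1" using bet c by simp
    qed
    obtain g0 where g0c: "g0 \<in> carrier_vec (L-T)" and g02: "(\<Sum>j<L-T. g0 $ j) = 1"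
      and g0x: "\<forall>c<n. (\<Sum>j<L-T. g0 $ j * xd j $ c) = 0\<^sub>v n $ c"
      using FL_surj[OF m _ ctrb PE zero_carrier_vec[of n], of "\<lambda>_. 0\<^sub>v m"] unfolding NN by auto
    have g01: "\<forall>c<n. (\<Sum>j<L-T. xd j $ c * g0 $ j) = 0"
      using g0x by (simp add: mult.commute)
    obtain G g where Gc: "G \<in> carrier_mat (L-T) n"
      and G1: "\<forall>c<n. \<forall>c'<n. (\<Sum>j<L-T. xd j $ c * G $$ (j,c')) = (if c = c' then 1 else 0)"
      and G2: "\<forall>c<n. (\<Sum>j<L-T. G $$ (j,c)) = 1"
      and gc: "g \<in> carrier_vec (L-T)" and g1: "\<forall>c<n. (\<Sum>j<L-T. xd j $ c * g $ j) = 0"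
      and g2: "(\<Sum>j<L-T. g $ j) = 1"
      and GGe: "vec (L-T) (\<lambda>j. (\<Sum>c<n. (G $$ (j,c) - g $ j) * x 0 $ c) + g $ j) = \<alpha>"
      using construct_G[OF G0c G01 G02 g0c g01 g02 \<alpha>c \<alpha>1 \<alpha>x x0c] by blast
    have GG: "G \<in> Gamma_set n T L xd" unfolding Gamma_char[OF TL] using Gc G1 G2 by blast
    have gg: "g \<in> Lambda_set n T L xd" unfolding Lambda_char[OF TL] using gc g1 g2 by blast
    have GGa: "GG_mat n G g *\<^sub>v (x 0 @\<^sub>v ones_vec 1) = \<alpha>"
      using GG_eq[OF Gc gc x0c] GGe by simp
    have ineqP: "vec_le (blockdiag T Hx *\<^sub>v stack n T x + blockdiag T Hu *\<^sub>v stack m T u)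
            (vec (dim_vec h * (T + 1)) (\<lambda>i. h $ (i mod dim_vec h)))"
      using ineq_equiv[OF Hx Hu h n m xc uc] ineq by blast
    show "feasible_P3 n m T L xd ud Hx Hu h xinit XT x u"
      unfolding feasible_P3_def using xc uc GG gg sx su GGa ineqP x0 xT by auto
  qed
  show ?thesis unfolding is_optimal_def using feq by simp
qed



end
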